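(* Assume $f_1$ is $C^3$ and $f_2$ is $C^2$, that $\frac{D}{\gamma_2\lambda_Z(D)}>f_2'(\lambda_Z(D))$, and let $\mu_{c_2}>\mu_{c_1}(D,D)$ be a zero of $A$. Then there exist $\delta>0$ and $\rho>0$ such that for every $(D_1,D_2)$ with $D_1,D_2>0$ and $\|(D_1,D_2)-(D,D)\|<\rho$ the following hold for all $\mu\in[\mu_{c_2}-\delta,\mu_{c_2}+\delta]$ (all of which satisfy $\mu>\mu_{c_1}(D_1,D_2)$): (1) the Jacobian of $( * )$ at $E_2(\mu,D_1,D_2)$ has one negative real eigenvalue and a pair of nonreal complex conjugate eigenvalues $a(\mu)\pm i\omega(\mu)$, $\omega(\mu)\ne0$; (2) if, in addition, $f_1''(N(\mu_{c_2},D,D))<0$, then (after possibly shrinking $\delta$ and $\rho$) $a(\mu)$ is differentiable in $\mu$, $a'(\mu)>0$ on $[\mu_{c_2}-\delta,\mu_{c_2}+\delta]$, and there is $\mu^*=\mu^*(D_1,D_2)\in(\mu_{c_2}-\delta,\mu_{c_2}+\delta)$ with $a(\mu^* )=0$; in particular at $\mu^*$ the Jacobian has a pair of nonzero purely imaginary eigenvalues crossing the imaginary axis with $a'(\mu^* )>0$, while its third eigenvalue is negative.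
   Context: Let $D,\gamma_1,\gamma_2>0$ and $f_1,f_2:[0,\infty)\to[0,\infty)$ bounded, continuously differentiable, $f_i(0)=0$, $f_i'>0$, with $\lim f_1>d/\gamma_1$, $\lim f_2>d/\gamma_2$ for all $d$ in a neighborhood of $D$. The system $( * )$ is $N'=(\mu-N)D-Pf_1(N)$, $P'=\gamma_1Pf_1(N)-D_1P-Zf_2(P)$, $Z'=\gamma_2Zf_2(P)-D_2Z$ with $D_1,D_2>0$ and parameter $\mu>0$. $\lambda_P(d),\lambda_Z(d)$ are defined by $f_1(\lambda_P(d))=d/\gamma_1$, $f_2(\lambda_Z(d))=d/\gamma_2$; $\mu_{c_1}(D_1,D_2)=\lambda_P(D_1)+D_1\lambda_Z(D_2)/(D\gamma_1)$. For $\mu>\mu_{c_1}(D_1,D_2)$, $N(\mu,D_1,D_2)$ is the unique $N\in(0,\mu)$ with $(\mu-N)D-\lambda_Z(D_2)f_1(N)=0$, $Z(\mu,D_1,D_2)=(\gamma_2/D_2)\lambda_Z(D_2)(\gamma_1f_1(N)-D_1)$, and $E_2(\mu,D_1,D_2)=(N,\lambda_Z(D_2),Z)$ is the coexistence equilibrium. For $\mu>\mu_{c_1}(D,D)$, $A(\mu)=Z(\mu,D,D)\bigl(\frac{D}{\gamma_2\lambda_Z(D)}-f_2'(\lambda_Z(D))\bigr)-\lambda_Z(D)f_1'(N(\mu,D,D))$ (twice the real part of the complex eigenvalue pair of the Jacobian at $E_2(\mu,D,D)$). *)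

theory Defs
  imports "HOL-Analysis.Analysis"
begin

definition lvl :: "(real \<Rightarrow> real) \<Rightarrow> real \<Rightarrow> real" where
  "lvl f c = (THE x. 0 \<le> x \<and> f x = c)"

definition lamP :: "(real \<Rightarrow> real) \<Rightarrow> real \<Rightarrow> real \<Rightarrow> real" where
  "lamP f1 g1 d = lvl f1 (d / g1)"

definition lamZ :: "(real \<Rightarrow> real) \<Rightarrow> real \<Rightarrow> real \<Rightarrow> real" where
  "lamZ f2 g2 d = lvl f2 (d / g2)"

definition muc1 ::
  "(real \<Rightarrow> real) \<Rightarrow> (real \<Rightarrow> real) \<Rightarrow> real \<Rightarrow> real \<Rightarrow> real \<Rightarrow> real \<Rightarrow> real \<Rightarrow> real" where
  "muc1 f1 f2 D g1 g2 D1 D2 = lamP f1 g1 D1 + D1 * lamZ f2 g2 D2 / (D * g1)"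

definition Neq ::
  "(real \<Rightarrow> real) \<Rightarrow> (real \<Rightarrow> real) \<Rightarrow> real \<Rightarrow> real \<Rightarrow> real \<Rightarrow> real \<Rightarrow> real \<Rightarrow> real \<Rightarrow> real" where
  "Neq f1 f2 D g1 g2 mu D1 D2 =
     (THE N. 0 < N \<and> N < mu \<and> (mu - N) * D - lamZ f2 g2 D2 * f1 N = 0)"

definition Zeq ::
  "(real \<Rightarrow> real) \<Rightarrow> (real \<Rightarrow> real) \<Rightarrow> real \<Rightarrow> real \<Rightarrow> real \<Rightarrow> real \<Rightarrow> real \<Rightarrow> real \<Rightarrow> real" where
  "Zeq f1 f2 D g1 g2 mu D1 D2 =
     (g2 / D2) * lamZ f2 g2 D2 * (g1 * f1 (Neq f1 f2 D g1 g2 mu D1 D2) - D1)"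

definition E2 ::
  "(real \<Rightarrow> real) \<Rightarrow> (real \<Rightarrow> real) \<Rightarrow> real \<Rightarrow> real \<Rightarrow> real \<Rightarrow> real \<Rightarrow> real \<Rightarrow> real
     \<Rightarrow> real \<times> real \<times> real" where
  "E2 f1 f2 D g1 g2 mu D1 D2 =
     (Neq f1 f2 D g1 g2 mu D1 D2, lamZ f2 g2 D2, Zeq f1 f2 D g1 g2 mu D1 D2)"

text \<open>Jacobian matrix of the system (*) at the point (N,P,Z), where f1', f2'
  are the derivatives of f1, f2 (passed explicitly as df1, df2).
  Rows/columns ordered N, P, Z.\<close>
definition jac ::
  "(real \<Rightarrow> real) \<Rightarrow> (real \<Rightarrow> real) \<Rightarrow> (real \<Rightarrow> real) \<Rightarrow> (real \<Rightarrow> real)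
   \<Rightarrow> real \<Rightarrow> real \<Rightarrow> real \<Rightarrow> real \<Rightarrow> real \<Rightarrow> real \<times> real \<times> real \<Rightarrow> real^3^3" where
  "jac f1 f2 df1 df2 D g1 g2 D1 D2 X =
     (case X of (N, P, Z) \<Rightarrow>
       vector [
         vector [- D - P * df1 N, - f1 N, 0],
         vector [g1 * P * df1 N, g1 * f1 N - D1 - Z * df2 P, - f2 P],
         vector [0, g2 * Z * df2 P, g2 * f2 P - D2]])"

definition eigenvalues :: "real^'n^'n \<Rightarrow> complex set" where
  "eigenvalues M = {l. \<exists>v :: complex^'n. v \<noteq> 0 \<and>
      (\<chi> i j. complex_of_real (M $ i $ j)) *v v = l *s v}"

definition Afun ::
  "(real \<Rightarrow> real) \<Rightarrow> (real \<Rightarrow> real) \<Rightarrow> (real \<Rightarrow> real) \<Rightarrow> (real \<Rightarrow> real)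
   \<Rightarrow> real \<Rightarrow> real \<Rightarrow> real \<Rightarrow> real \<Rightarrow> real" where
  "Afun f1 f2 df1 df2 D g1 g2 mu =
     Zeq f1 f2 D g1 g2 mu D D * (D / (g2 * lamZ f2 g2 D) - df2 (lamZ f2 g2 D))
     - lamZ f2 g2 D * df1 (Neq f1 f2 D g1 g2 mu D D)"

end

theory Submission
  imports Defs
begin

definition cub :: "real \<Rightarrow> real \<Rightarrow> real \<Rightarrow> real \<Rightarrow> real" where
  "cub al be ga x = x^3 + al*x^2 + be*x + ga"

definition disc :: "real \<Rightarrow> real \<Rightarrow> real \<Rightarrow> real" where
  "disc al be ga = al^2*be^2 - 4*be^3 - 4*al^3*ga - 27*ga^2 + 18*al*be*ga"

definition rroot :: "real \<Rightarrow> real \<Rightarrow> real \<Rightarrow> real" where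
  "rroot al be ga = (THE r. cub al be ga r = 0)"

lemma cub_cont: "continuous_on S (cub al be ga)"
  unfolding cub_def by (intro continuous_intros)

lemma cub_root_ex: "\<exists>r. cub al be ga r = 0"
proof -
  define M where "M = 1 + \<bar>al\<bar> + \<bar>be\<bar> + \<bar>ga\<bar>"
  have M1: "M \<ge> 1" unfolding M_def by auto
  have A: "M^2 * (M - \<bar>al\<bar>) \<ge> M * (\<bar>be\<bar> + \<bar>ga\<bar>)"
  proof -
    have "M - \<bar>al\<bar> \<ge> 1 + \<bar>be\<bar> + \<bar>ga\<bar>" unfolding M_def by auto
    hence "M^2 * (M - \<bar>al\<bar>) \<ge> M^2 * (1 + \<bar>be\<bar> + \<bar>ga\<bar>)" using M1 by (intro mult_left_mono) auto
    moreover have "M^2 * (1 + \<bar>be\<bar> + \<bar>ga\<bar>) \<ge> M * (\<bar>be\<bar> + \<bar>ga\<bar>)"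
    proof -
      have "M^2 \<ge> M" using M1 by (simp add: power2_eq_square)
      hence "M^2 * (1 + \<bar>be\<bar> + \<bar>ga\<bar>) \<ge> M * (1 + \<bar>be\<bar> + \<bar>ga\<bar>)" by (intro mult_right_mono) auto
      thus ?thesis using M1 by (simp add: algebra_simps)
    qed
    ultimately show ?thesis by linarith
  qed
  have B: "M * (\<bar>be\<bar> + \<bar>ga\<bar>) \<ge> \<bar>be\<bar> * M + \<bar>ga\<bar>" using M1
    using mult_right_mono[OF M1, of "\<bar>ga\<bar>"] by (simp add: algebra_simps)
  have c1: "\<bar>al * M^2\<bar> = \<bar>al\<bar> * M^2" "\<bar>be * M\<bar> = \<bar>be\<bar> * M" using M1 by (auto simp: abs_mult)
  have "cub al be ga M \<ge> 0"
  proof -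
    have "al * M^2 \<ge> - (\<bar>al\<bar> * M^2)" "be * M \<ge> - (\<bar>be\<bar> * M)" "ga \<ge> - \<bar>ga\<bar>"
      using c1 by (metis abs_ge_minus_self minus_le_iff)+
    moreover have "M^3 = M^2 * M" by (simp add: power3_eq_cube power2_eq_square)
    ultimately show ?thesis unfolding cub_def using A B by (simp add: algebra_simps)
  qed
  moreover have "cub al be ga (-M) \<le> 0"
  proof -
    have "al * M^2 \<le> \<bar>al\<bar> * M^2" "- (be * M) \<le> (\<bar>be\<bar> * M)" "ga \<le> \<bar>ga\<bar>"
      using c1 by (metis abs_ge_self abs_ge_minus_self)+
    moreover have "M^3 = M^2 * M" by (simp add: power3_eq_cube power2_eq_square)
    ultimately show ?thesis unfolding cub_def using A B by (simp add: algebra_simps)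
  qed
  ultimately obtain r where "cub al be ga r = 0"
    using IVT'[of "cub al be ga" "-M" 0 M] M1 cub_cont by force
  thus ?thesis ..
qed

lemma disc_subst:
  "disc al be (-(r^3 + al*r^2 + be*r)) = ((al+r)^2 - 4*(be + r*(al+r))) * (r^2 + (al+r)*r + (be + r*(al+r)))^2"
  unfolding disc_def by algebra

lemma cub_disc:
  assumes "cub al be ga r = 0"
  shows "disc al be ga = ((al+r)^2 - 4*(be + r*(al+r))) * (r^2 + (al+r)*r + (be + r*(al+r)))^2"
proof -
  have "ga = -(r^3 + al*r^2 + be*r)" using assms unfolding cub_def by simp
  thus ?thesis using disc_subst by simp
qed

lemma cub_factor:
  assumes "cub al be ga r = 0"
  shows "cub al be ga x = (x - r) * (x^2 + (al+r)*x + (be + r*(al+r)))"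
proof -
  have "ga = -(r^3 + al*r^2 + be*r)" using assms unfolding cub_def by simp
  thus ?thesis unfolding cub_def by (simp add: power2_eq_square power3_eq_cube algebra_simps)
qed

lemma disc_neg_quad:
  assumes "cub al be ga r = 0" "disc al be ga < 0"
  shows "(al+r)^2 < 4*(be + r*(al+r))"
proof -
  have "((al+r)^2 - 4*(be + r*(al+r))) * (r^2 + (al+r)*r + (be + r*(al+r)))^2 < 0"
    using assms cub_disc by metis
  hence "(al+r)^2 - 4*(be + r*(al+r)) < 0"
    by (metis mult_nonneg_nonneg not_less zero_le_power2)
  thus ?thesis by simp
qed

lemma quad_pos:
  fixes s t x :: real
  assumes "s^2 < 4*t"
  shows "x^2 + s*x + t > 0"
proof -
  have "x^2 + s*x + t = (x + s/2)^2 + (t - s^2/4)" by (simp add: power2_eq_square algebra_simps)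
  moreover have "t - s^2/4 > 0" using assms by simp
  ultimately show ?thesis by (metis add_nonneg_pos zero_le_power2)
qed

lemma cub_sign:
  assumes "cub al be ga r = 0" "disc al be ga < 0"
  shows "x < r \<Longrightarrow> cub al be ga x < 0" "x > r \<Longrightarrow> cub al be ga x > 0"
    "cub al be ga x = 0 \<longleftrightarrow> x = r"
proof -
  have q: "x^2 + (al+r)*x + (be + r*(al+r)) > 0"
    using quad_pos[OF disc_neg_quad[OF assms]] .
  show "x < r \<Longrightarrow> cub al be ga x < 0" "x > r \<Longrightarrow> cub al be ga x > 0"
    "cub al be ga x = 0 \<longleftrightarrow> x = r"
    unfolding cub_factor[OF assms(1)] using q
    by (auto simp: mult_pos_pos mult_neg_pos)
qed

lemma rroot_eq:
  assumes "cub al be ga r = 0" "disc al be ga < 0"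
  shows "rroot al be ga = r"
  unfolding rroot_def using cub_sign(3)[OF assms] by auto

lemma rroot_root: "cub al be ga (rroot al be ga) = 0" if "disc al be ga < 0"
proof -
  obtain r where "cub al be ga r = 0" using cub_root_ex by blast
  thus ?thesis using rroot_eq that by simp
qed

lemma eig3:
  fixes p11 p12 p21 p22 p23 p32 :: real
  assumes nz: "p11 \<noteq> 0" "p12 \<noteq> 0" "p21 \<noteq> 0" "p23 \<noteq> 0" "p32 \<noteq> 0"
  shows "eigenvalues (vector [vector [p11, p12, 0], vector [p21, p22, p23], vector [0, p32, 0]] :: real^3^3)
     = {l. l^3 - of_real (p11+p22) * l^2 + of_real (p11*p22 - p12*p21 - p23*p32) * l + of_real (p11*p23*p32) = 0}"
    (is "eigenvalues ?M = {l. ?ch l = 0}")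
proof -
  have ch: "?ch l = (l - of_real p11) * ((l - of_real p22) * l - of_real p23 * of_real p32) - of_real p12 * of_real p21 * l" for l
    by (simp add: power2_eq_square power3_eq_cube algebra_simps)
  have eqv: "(\<chi> i j. complex_of_real (?M $ i $ j)) *v v = l *s v \<longleftrightarrow>
     of_real p11 * v$1 + of_real p12 * v$2 = l * v$1 \<and>
     of_real p21 * v$1 + of_real p22 * v$2 + of_real p23 * v$3 = l * v$2 \<and>
     of_real p32 * v$2 = l * v$3" for v :: "complex^3" and l
    by (simp add: vec_eq_iff forall_3 matrix_vector_mult_def sum_3)
  show ?thesis
  proof (intro set_eqI iffI)
    fix l assume "l \<in> eigenvalues ?M"
    then obtain v :: "complex^3" where v0: "v \<noteq> 0" and e: "(\<chi> i j. complex_of_real (?M $ i $ j)) *v v = l *s v"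
      unfolding eigenvalues_def by blast
    have e1: "of_real p11 * v$1 + of_real p12 * v$2 = l * v$1"
      and e2: "of_real p21 * v$1 + of_real p22 * v$2 + of_real p23 * v$3 = l * v$2"
      and e3: "of_real p32 * v$2 = l * v$3" using e eqv by blast+
    have vv: "v$1 \<noteq> 0 \<or> v$2 \<noteq> 0 \<or> v$3 \<noteq> 0" using v0 by (auto simp: vec_eq_iff forall_3)
    have key: "?ch l * v$2 = 0"
    proof -
      have a: "(l - of_real p11) * v$1 = of_real p12 * v$2" using e1 by (simp add: algebra_simps)
      have "0 = l * (l - of_real p11) * (of_real p21 * v$1 + of_real p22 * v$2 + of_real p23 * v$3 - l * v$2)"
        using e2 by simp
      also have "\<dots> = of_real p21 * l * ((l - of_real p11) * v$1) + l * (l - of_real p11) * (of_real p22 - l) * v$2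
           + of_real p23 * (l - of_real p11) * (l * v$3)" by (simp add: algebra_simps)
      also have "\<dots> = - (?ch l * v$2)" unfolding a e3[symmetric] ch by (simp add: algebra_simps)
      finally show ?thesis by simp
    qed
    show "l \<in> {l. ?ch l = 0}"
    proof (cases "v$2 = 0")
      case False thus ?thesis using key by simp
    next
      case True
      have A: "(of_real p11 - l) * v$1 = 0" using e1 True by (simp add: algebra_simps)
      have B: "l * v$3 = 0" using e3 True by simp
      have C: "of_real p21 * v$1 + of_real p23 * v$3 = 0" using e2 True by simp
      show ?thesis
      proof (cases "l = of_real p11")
        case True
        hence "v$3 = 0" using B nz by auto
        hence "v$1 = 0" using C nz by auto
        thus ?thesis using vv \<open>v$2 = 0\<close> \<open>v$3 = 0\<close> by auto
      next
        case False
        hence v1: "v$1 = 0" using A by auto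
        hence "v$3 = 0" using C nz by auto
        thus ?thesis using vv v1 \<open>v$2 = 0\<close> by auto
      qed
    qed
  next
    fix l assume "l \<in> {l. ?ch l = 0}"
    hence r: "?ch l = 0" by simp
    define v :: "complex^3" where "v = vector [of_real p12 * l, l * (l - of_real p11), of_real p32 * (l - of_real p11)]"
    have v1: "v$1 = of_real p12 * l" and v2: "v$2 = l * (l - of_real p11)" and v3: "v$3 = of_real p32 * (l - of_real p11)"
      unfolding v_def by simp_all
    have "v \<noteq> 0"
    proof
      assume "v = 0"
      hence z: "v$1 = 0" "v$2 = 0" "v$3 = 0" by simp_all
      show False
      proof (cases "l = 0")
        case True thus False using z(3) v3 nz by simp
      next
        case False
        hence "l = of_real p11" using z(2) v2 by simp
        thus False using z(1) v1 nz by simp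
      qed
    qed
    moreover have "(\<chi> i j. complex_of_real (?M $ i $ j)) *v v = l *s v"
      unfolding eqv v1 v2 v3
    proof (intro conjI)
      show "of_real p21 * (of_real p12 * l) + of_real p22 * (l * (l - of_real p11)) + of_real p23 * (of_real p32 * (l - of_real p11)) =
        l * (l * (l - of_real p11))"
        using r unfolding ch by (simp add: algebra_simps)
    qed (simp_all add: algebra_simps)
    ultimately show "l \<in> eigenvalues ?M" unfolding eigenvalues_def by blast
  qed
qed

lemma quad_cfactor:
  fixes z :: complex and x y :: real
  shows "(z - Complex x y) * (z - Complex x (-y)) = z^2 - of_real (2*x) * z + of_real (x^2 + y^2)"
  by (simp add: complex_eq_iff power2_eq_square algebra_simps)

lemma cubic_croots:
  assumes d: "disc al be ga < 0" and g: "ga > 0"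
  shows "\<exists>y. rroot al be ga < 0 \<and> y \<noteq> 0 \<and> {l::complex. l^3 + of_real al * l^2 + of_real be * l + of_real ga = 0}
     = {of_real (rroot al be ga), Complex (- (al + rroot al be ga) / 2) y, Complex (- (al + rroot al be ga) / 2) (-y)}"
proof -
  define r where "r = rroot al be ga"
  define x where "x = - (al + r) / 2"
  define y where "y = sqrt ((be + r*(al+r)) - (al+r)^2/4)"
  have cr: "cub al be ga r = 0" unfolding r_def using rroot_root[OF d] .
  define s where "s = al + r"
  define t where "t = be + r * s"
  have st: "s^2 < 4*t" using disc_neg_quad[OF cr d] unfolding s_def t_def by simp
  have gat: "ga = - r * t" using cr unfolding cub_def t_def s_def by (simp add: power2_eq_square power3_eq_cube algebra_simps)
  have tpos: "t > 0" using st by (smt (verit) zero_le_power2)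
  have r0: "r < 0" using g gat tpos by (smt (verit) mult_nonneg_nonneg mult_minus_left)
  have y2: "y^2 = t - s^2/4" unfolding y_def s_def[symmetric] t_def[symmetric] using st by simp
  have y0: "y > 0" unfolding y_def s_def[symmetric] t_def[symmetric] using st by simp
  have xs: "2 * x = - s" unfolding x_def s_def by simp
  have fac: "l^3 + of_real al * l^2 + of_real be * l + of_real ga = (l - of_real r) * ((l - Complex x y) * (l - Complex x (-y)))" for l :: complex
  proof -
    have q: "(l - Complex x y) * (l - Complex x (-y)) = l^2 + of_real s * l + of_real t"
    proof -
      have "x = -s/2" using xs by simp
      hence "x^2 = s^2/4" by (simp add: power2_eq_square)
      hence xy: "x^2 + y^2 = t" using y2 by simp
      show ?thesis unfolding quad_cfactor xs xy by simp
    qed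
    have als: "complex_of_real al = of_real s - of_real r" and bet: "complex_of_real be = of_real t - of_real r * of_real s"
      and gac: "complex_of_real ga = - of_real r * of_real t"
      unfolding s_def t_def gat by simp_all
    show ?thesis unfolding q als bet gac by (simp add: power2_eq_square power3_eq_cube algebra_simps)
  qed
  have "{l::complex. l^3 + of_real al * l^2 + of_real be * l + of_real ga = 0} = {of_real r, Complex x y, Complex x (-y)}"
    unfolding fac by auto
  thus ?thesis using r0 y0 unfolding r_def x_def by (intro exI[of _ y]) auto
qed

lemma eig_struct:
  fixes p11 p12 p21 p22 p23 p32 :: real
  assumes nz: "p11 \<noteq> 0" "p12 \<noteq> 0" "p21 \<noteq> 0" "p23 \<noteq> 0" "p32 \<noteq> 0"
    and d: "disc (-(p11+p22)) (p11*p22 - p12*p21 - p23*p32) (p11*p23*p32) < 0"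
    and g: "p11*p23*p32 > 0"
  defines "r \<equiv> rroot (-(p11+p22)) (p11*p22 - p12*p21 - p23*p32) (p11*p23*p32)"
  shows "\<exists>\<omega>. r < 0 \<and> \<omega> \<noteq> 0 \<and> eigenvalues (vector [vector [p11, p12, 0], vector [p21, p22, p23], vector [0, p32, 0]] :: real^3^3)
     = {complex_of_real r, Complex (- ((-(p11+p22)) + r) / 2) \<omega>, Complex (- ((-(p11+p22)) + r) / 2) (- \<omega>)}"
proof -
  have e: "eigenvalues (vector [vector [p11, p12, 0], vector [p21, p22, p23], vector [0, p32, 0]] :: real^3^3)
     = {l::complex. l^3 + of_real (-(p11+p22)) * l^2 + of_real (p11*p22 - p12*p21 - p23*p32) * l + of_real (p11*p23*p32) = 0}"
    unfolding eig3[OF nz] by (intro Collect_cong) (simp add: algebra_simps)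
  show ?thesis unfolding e r_def by (rule cubic_croots[OF d g])
qed

lemma the_tendsto:
  fixes x0 :: real
  assumes uniq: "eventually (\<lambda>y. \<forall>x x'. P y x \<longrightarrow> P y x' \<longrightarrow> x = x') F"
    and ex: "\<And>e. e > 0 \<Longrightarrow> eventually (\<lambda>y. \<exists>x. \<bar>x - x0\<bar> < e \<and> P y x) F"
  shows "((\<lambda>y. THE x. P y x) \<longlongrightarrow> x0) F"
proof (rule tendstoI)
  fix e :: real assume "e > 0"
  from eventually_conj[OF uniq ex[OF this]]
  show "eventually (\<lambda>y. dist (THE x. P y x) x0 < e) F"
  proof (rule eventually_mono)
    fix y assume h: "(\<forall>x x'. P y x \<longrightarrow> P y x' \<longrightarrow> x = x') \<and> (\<exists>x. \<bar>x - x0\<bar> < e \<and> P y x)"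
    then obtain x where x: "\<bar>x - x0\<bar> < e" "P y x" by blast
    have "(THE x. P y x) = x" using h x by (intro the_equality) auto
    thus "dist (THE x. P y x) x0 < e" using x by (simp add: dist_real_def)
  qed
qed

lemma disc_tendsto:
  assumes "(al \<longlongrightarrow> al0) F" "(be \<longlongrightarrow> be0) F" "(ga \<longlongrightarrow> ga0) F"
  shows "((\<lambda>y. disc (al y) (be y) (ga y)) \<longlongrightarrow> disc al0 be0 ga0) F"
  unfolding disc_def by (intro tendsto_intros assms)

lemma cub_tendsto:
  assumes "(al \<longlongrightarrow> al0) F" "(be \<longlongrightarrow> be0) F" "(ga \<longlongrightarrow> ga0) F"
  shows "((\<lambda>y. cub (al y) (be y) (ga y) c) \<longlongrightarrow> cub al0 be0 ga0 c) F"
  unfolding cub_def by (intro tendsto_intros assms)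

lemma rroot_tendsto:
  assumes t: "(al \<longlongrightarrow> al0) F" "(be \<longlongrightarrow> be0) F" "(ga \<longlongrightarrow> ga0) F"
    and d0: "disc al0 be0 ga0 < 0"
  shows "((\<lambda>y. rroot (al y) (be y) (ga y)) \<longlongrightarrow> rroot al0 be0 ga0) F"
proof -
  have ed: "eventually (\<lambda>y. disc (al y) (be y) (ga y) < 0) F"
    using order_tendstoD(2)[OF disc_tendsto[OF t] d0] .
  define r0 where "r0 = rroot al0 be0 ga0"
  have r0: "cub al0 be0 ga0 r0 = 0" unfolding r0_def using rroot_root[OF d0] .
  have eqf: "(\<lambda>y. rroot (al y) (be y) (ga y)) = (\<lambda>y. THE r. cub (al y) (be y) (ga y) r = 0)"
    unfolding rroot_def by simp
  have "((\<lambda>y. THE r. cub (al y) (be y) (ga y) r = 0) \<longlongrightarrow> r0) F"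
  proof (rule the_tendsto)
    show "eventually (\<lambda>y. \<forall>x x'. cub (al y) (be y) (ga y) x = 0 \<longrightarrow> cub (al y) (be y) (ga y) x' = 0 \<longrightarrow> x = x') F"
      using ed by (rule eventually_mono) (metis cub_sign(3) rroot_root)
  next
    fix e :: real assume e: "e > 0"
    have a: "cub al0 be0 ga0 (r0 - e/2) < 0" "cub al0 be0 ga0 (r0 + e/2) > 0"
      using cub_sign(1,2)[OF r0 d0] e by auto
    have "eventually (\<lambda>y. cub (al y) (be y) (ga y) (r0 - e/2) < 0) F"
      using order_tendstoD(2)[OF cub_tendsto[OF t] a(1)] .
    moreover have "eventually (\<lambda>y. cub (al y) (be y) (ga y) (r0 + e/2) > 0) F"
      using order_tendstoD(1)[OF cub_tendsto[OF t] a(2)] .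
    ultimately show "eventually (\<lambda>y. \<exists>x. \<bar>x - r0\<bar> < e \<and> cub (al y) (be y) (ga y) x = 0) F"
    proof eventually_elim
      case (elim y)
      have le: "cub (al y) (be y) (ga y) (r0 - e/2) \<le> 0" "0 \<le> cub (al y) (be y) (ga y) (r0 + e/2)"
        "r0 - e/2 \<le> r0 + e/2" using elim e by auto
      obtain x where "r0 - e/2 \<le> x" "x \<le> r0 + e/2" "cub (al y) (be y) (ga y) x = 0"
        using IVT'[OF le cub_cont] by blast
      thus ?case using e by (intro exI[of _ x]) auto
    qed
  qed
  thus ?thesis unfolding eqf r0_def .
qed

lemma deriv_at_pos:
  assumes "x > 0" "(f has_real_derivative d) (at x within {0..})"
  shows "(f has_real_derivative d) (at x)"
proof -
  have "interior {0::real..} = {0<..}" by (rule interior_Ici[of "-1"]) simp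
  hence "at x within {0..} = at x" using assms(1) by (intro at_within_interior) simp
  thus ?thesis using assms(2) by simp
qed

lemma smono_from_deriv:
  fixes f df :: "real \<Rightarrow> real"
  assumes d: "\<forall>x\<ge>0. (f has_real_derivative df x) (at x within {0..})" and p: "\<forall>x\<ge>0. 0 < df x"
  shows "strict_mono_on {0..} f" "continuous_on {0..} f"
proof -
  show c: "continuous_on {0..} f" using d by (intro DERIV_continuous_on) auto
  show "strict_mono_on {0..} f"
  proof (rule strict_mono_onI)
    fix a b :: real assume "a \<in> {0..}" "b \<in> {0..}" "a < b"
    hence a0: "a \<ge> 0" "a < b" by auto
    show "f a < f b"
    proof (rule DERIV_pos_imp_increasing_open[OF a0(2)])
      fix x assume "a < x" "x < b"
      hence "x > 0" using a0 by auto
      thus "\<exists>y. DERIV f x :> y \<and> y > 0" using deriv_at_pos d p by (intro exI[of _ "df x"]) auto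
    next
      show "continuous_on {a..b} f" using a0 by (intro continuous_on_subset[OF c]) auto
    qed
  qed
qed

lemma smono_uniq:
  assumes "strict_mono_on {0..} f" "0 \<le> x" "0 \<le> x'" "(f::real\<Rightarrow>real) x = f x'"
  shows "x = x'"
  using assms by (metis atLeast_iff linorder_neqE_linordered_idom order_less_irrefl strict_mono_onD)

lemma lvl_eq:
  assumes "strict_mono_on {0..} f" "0 \<le> x" "f x = c"
  shows "lvl f c = x"
  unfolding lvl_def using assms smono_uniq by (intro the_equality) auto

lemma lvl_tendsto:
  fixes f :: "real \<Rightarrow> real"
  assumes sm: "strict_mono_on {0..} f" and co: "continuous_on {0..} f" and x0: "x0 > 0"
    and t: "(c \<longlongrightarrow> f x0) F"
  shows "((\<lambda>y. lvl f (c y)) \<longlongrightarrow> x0) F"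
  unfolding lvl_def
proof (rule the_tendsto)
  show "eventually (\<lambda>y. \<forall>x x'. 0 \<le> x \<and> f x = c y \<longrightarrow> 0 \<le> x' \<and> f x' = c y \<longrightarrow> x = x') F"
    using smono_uniq[OF sm] by auto
next
  fix e :: real assume e: "e > 0"
  define e' where "e' = min (e/2) (x0/2)"
  have e': "e' > 0" "e' < e" "x0 - e' > 0" unfolding e'_def using e x0 by auto
  have a: "f (x0 - e') < f x0" "f x0 < f (x0 + e')" using sm e' by (auto intro!: strict_mono_onD[OF sm])
  have "eventually (\<lambda>y. f (x0 - e') < c y) F" using order_tendstoD(1)[OF t a(1)] .
  moreover have "eventually (\<lambda>y. c y < f (x0 + e')) F" using order_tendstoD(2)[OF t a(2)] .
  ultimately show "eventually (\<lambda>y. \<exists>x. \<bar>x - x0\<bar> < e \<and> 0 \<le> x \<and> f x = c y) F"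
  proof eventually_elim
    case (elim y)
    have "continuous_on {x0 - e'..x0 + e'} f" using continuous_on_subset[OF co] e' by auto
    then obtain x where "x0 - e' \<le> x" "x \<le> x0 + e'" "f x = c y"
      using IVT'[of f "x0 - e'" "c y" "x0 + e'"] elim e' by auto
    thus ?case using e' by (intro exI[of _ x]) auto
  qed
qed

lemma exceed_Lim:
  fixes f :: "real \<Rightarrow> real"
  assumes sm: "strict_mono_on {0..} f" and bd: "bounded (f ` {0..})" and c: "c < Lim at_top f"
  shows "\<exists>x\<ge>0. f x > c"
proof -
  define g where "g x = f (max x 0)" for x
  have mg: "mono g" unfolding g_def mono_def
    by (metis atLeast_iff max.cobounded2 max.mono order.refl strict_mono_on_leD[OF sm])
  obtain B where B: "\<forall>x\<in>f ` {0..}. norm x \<le> B" using bd bounded_iff by blast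
  have "bdd_above (range (\<lambda>n. g (real n)))"
    unfolding bdd_above_def using B by (intro exI[of _ B]) (force simp: g_def abs_le_iff)
  moreover have "incseq (\<lambda>n. g (real n))" using mg unfolding incseq_def mono_def by simp
  ultimately have "(\<lambda>n. g (real n)) \<longlonglongrightarrow> (SUP i. g (real i))" by (rule LIMSEQ_incseq_SUP)
  hence tg: "(g \<longlongrightarrow> (SUP i. g (real i))) at_top" by (rule tendsto_at_topI_sequentially_real[OF mg])
  have "eventually (\<lambda>x. g x = f x) at_top" unfolding g_def using eventually_ge_at_top[of 0]
    by (rule eventually_mono) simp
  hence tf: "(f \<longlongrightarrow> (SUP i. g (real i))) at_top" using tg tendsto_cong by blast
  hence "Lim at_top f = (SUP i. g (real i))" by (intro tendsto_Lim) simp_all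
  hence "eventually (\<lambda>x. f x > c) at_top" using order_tendstoD(1)[OF tf] c by simp
  hence "eventually (\<lambda>x. f x > c \<and> x \<ge> 0) at_top" using eventually_ge_at_top[of 0] by eventually_elim auto
  then obtain x where "f x > c \<and> x \<ge> 0" using eventually_happens trivial_limit_at_top_linorder by blast
  thus ?thesis by blast
qed

lemma lvl_ex:
  fixes f :: "real \<Rightarrow> real"
  assumes sm: "strict_mono_on {0..} f" and co: "continuous_on {0..} f" and f0: "f 0 = 0"
    and bd: "bounded (f ` {0..})" and c: "c < Lim at_top f" "c > 0"
  shows "lvl f c > 0" "f (lvl f c) = c"
proof -
  obtain x where x: "x \<ge> 0" "f x > c" using exceed_Lim[OF sm bd c(1)] by blast
  obtain y where y: "0 \<le> y" "y \<le> x" "f y = c"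
    using IVT'[of f 0 c x] x c f0 continuous_on_subset[OF co] by force
  have "lvl f c = y" using lvl_eq[OF sm y(1) y(3)] .
  moreover have "y \<noteq> 0" using y c f0 by auto
  ultimately show "lvl f c > 0" "f (lvl f c) = c" using y by auto
qed

lemma lvl_eventually:
  fixes f :: "real \<Rightarrow> real"
  assumes sm: "strict_mono_on {0..} f" and co: "continuous_on {0..} f" and x0: "x0 > 0"
    and t: "(c \<longlongrightarrow> f x0) F"
  shows "eventually (\<lambda>y. lvl f (c y) > 0 \<and> f (lvl f (c y)) = c y) F"
proof -
  have "eventually (\<lambda>y. lvl f (c y) > 0) F"
    using order_tendstoD(1)[OF lvl_tendsto[OF sm co x0 t] x0] .
  moreover have a: "f 0 < f x0" using sm x0 by (auto intro!: strict_mono_onD[OF sm])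
  have "eventually (\<lambda>y. f 0 < c y) F" using order_tendstoD(1)[OF t a] .
  moreover have a2: "f x0 < f (x0 + 1)" using sm x0 by (auto intro!: strict_mono_onD[OF sm])
  have "eventually (\<lambda>y. c y < f (x0 + 1)) F" using order_tendstoD(2)[OF t a2] .
  ultimately show ?thesis
  proof eventually_elim
    case (elim y)
    obtain z where z: "0 \<le> z" "z \<le> x0 + 1" "f z = c y"
      using IVT'[of f 0 "c y" "x0 + 1"] elim x0 continuous_on_subset[OF co] by force
    show ?case using elim lvl_eq[OF sm z(1) z(3)] z by simp
  qed
qed

definition NTH :: "(real \<Rightarrow> real) \<Rightarrow> real \<Rightarrow> real \<Rightarrow> real \<Rightarrow> real" where
  "NTH f D q m = (THE N. 0 < N \<and> N < m \<and> (m - N) * D - q * f N = 0)"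

lemma NTH_prop:
  fixes f :: "real \<Rightarrow> real"
  assumes sm: "strict_mono_on {0..} f" and co: "continuous_on {0..} f" and f0: "f 0 = 0"
    and D: "D > 0" and q: "q > 0" and m: "m > 0"
  shows "0 < NTH f D q m" "NTH f D q m < m" "(m - NTH f D q m) * D - q * f (NTH f D q m) = 0"
proof -
  have fm: "f m > 0" using strict_mono_onD[OF sm, of 0 m] m f0 by auto
  have c: "continuous_on {0..m} (\<lambda>N. (m - N) * D - q * f N)"
    by (intro continuous_intros continuous_on_subset[OF co]) auto
  obtain N where N: "0 \<le> N" "N \<le> m" "(m - N) * D - q * f N = 0"
    using IVT2'[of "\<lambda>N. (m - N) * D - q * f N" m 0 0, OF _ _ _ c] m D q fm f0 by auto
  have N0: "N \<noteq> 0" using N m D f0 by auto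
  have Nm: "N \<noteq> m" using N q fm by auto
  have uniq: "N' = N" if "0 < N'" "N' < m" "(m - N') * D - q * f N' = 0" for N'
  proof (rule ccontr)
    assume "N' \<noteq> N"
    hence "N' < N \<or> N < N'" by auto
    thus False
    proof
      assume "N' < N" hence "f N' < f N" using strict_mono_onD[OF sm] that N by auto
      thus False using that N D q by (smt (verit) mult_strict_left_mono mult_strict_right_mono \<open>N' < N\<close>)
    next
      assume "N < N'" hence "f N < f N'" using strict_mono_onD[OF sm] that N by auto
      thus False using that N D q by (smt (verit) mult_strict_left_mono mult_strict_right_mono \<open>N < N'\<close>)
    qed
  qed
  have "NTH f D q m = N" unfolding NTH_def using N N0 Nm uniq by (intro the_equality) auto
  thus "0 < NTH f D q m" "NTH f D q m < m" "(m - NTH f D q m) * D - q * f (NTH f D q m) = 0"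
    using N N0 Nm by auto
qed

lemma NTH_tendsto:
  fixes f :: "real \<Rightarrow> real"
  assumes sm: "strict_mono_on {0..} f" and co: "continuous_on {0..} f" and f0: "f 0 = 0"
    and D: "D > 0" and q0: "q0 > 0" and m0: "m0 > 0"
    and tq: "(q \<longlongrightarrow> q0) F" and tm: "(m \<longlongrightarrow> m0) F"
  shows "((\<lambda>y. NTH f D (q y) (m y)) \<longlongrightarrow> NTH f D q0 m0) F"
proof -
  define N0 where "N0 = NTH f D q0 m0"
  note P0 = NTH_prop[OF sm co f0 D q0 m0, folded N0_def]
  have eq: "eventually (\<lambda>y. q y > 0) F" using order_tendstoD(1)[OF tq q0] .
  have "((\<lambda>y. THE N. 0 < N \<and> N < m y \<and> (m y - N) * D - q y * f N = 0) \<longlongrightarrow> N0) F"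
  proof (rule the_tendsto)
    show "eventually (\<lambda>y. \<forall>x x'. (0 < x \<and> x < m y \<and> (m y - x) * D - q y * f x = 0) \<longrightarrow>
        (0 < x' \<and> x' < m y \<and> (m y - x') * D - q y * f x' = 0) \<longrightarrow> x = x') F"
      using eq
    proof eventually_elim
      case (elim y)
      show ?case
      proof (intro allI impI)
        fix x x' assume h: "0 < x \<and> x < m y \<and> (m y - x) * D - q y * f x = 0"
            "0 < x' \<and> x' < m y \<and> (m y - x') * D - q y * f x' = 0"
        show "x = x'"
        proof (rule ccontr)
          assume "x \<noteq> x'"
          hence "x < x' \<or> x' < x" by auto
          thus False
          proof
            assume l: "x < x'" hence "f x < f x'" using strict_mono_onD[OF sm] h by auto
            thus False using h D elim l by (smt (verit) mult_strict_left_mono mult_strict_right_mono)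
          next
            assume l: "x' < x" hence "f x' < f x" using strict_mono_onD[OF sm] h by auto
            thus False using h D elim l by (smt (verit) mult_strict_left_mono mult_strict_right_mono)
          qed
        qed
      qed
    qed
  next
    fix e :: real assume e: "e > 0"
    define e' where "e' = min (e/2) (N0/2)"
    have e': "e' > 0" "e' < e" "N0 - e' > 0" unfolding e'_def using e P0 by auto
    have fa: "f (N0 - e') < f N0" "f N0 < f (N0 + e')" using e' by (auto intro!: strict_mono_onD[OF sm])
    have a: "(m0 - (N0 - e')) * D - q0 * f (N0 - e') > 0"
    proof -
      have "q0 * f (N0 - e') < q0 * f N0" using fa q0 by simp
      moreover have "(m0 - N0) * D < (m0 - (N0 - e')) * D" using e' D by simp
      ultimately show ?thesis using P0(3) by linarith
    qed
    have b: "(m0 - (N0 + e')) * D - q0 * f (N0 + e') < 0"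
    proof -
      have "q0 * f (N0 + e') > q0 * f N0" using fa q0 by simp
      moreover have "(m0 - N0) * D > (m0 - (N0 + e')) * D" using e' D by simp
      ultimately show ?thesis using P0(3) by linarith
    qed
    have t1: "((\<lambda>y. (m y - (N0 - e')) * D - q y * f (N0 - e')) \<longlongrightarrow> (m0 - (N0 - e')) * D - q0 * f (N0 - e')) F"
      by (intro tendsto_intros tq tm)
    have t2: "((\<lambda>y. (m y - (N0 + e')) * D - q y * f (N0 + e')) \<longlongrightarrow> (m0 - (N0 + e')) * D - q0 * f (N0 + e')) F"
      by (intro tendsto_intros tq tm)
    have "eventually (\<lambda>y. (m y - (N0 - e')) * D - q y * f (N0 - e') > 0) F" using order_tendstoD(1)[OF t1 a] .
    moreover have "eventually (\<lambda>y. (m y - (N0 + e')) * D - q y * f (N0 + e') < 0) F" using order_tendstoD(2)[OF t2 b] .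
    ultimately show "eventually (\<lambda>y. \<exists>x. \<bar>x - N0\<bar> < e \<and> 0 < x \<and> x < m y \<and> (m y - x) * D - q y * f x = 0) F"
      using eq
    proof eventually_elim
      case (elim y)
      have c: "continuous_on {N0 - e'..N0 + e'} (\<lambda>N. (m y - N) * D - q y * f N)"
        using e' by (intro continuous_intros continuous_on_subset[OF co]) auto
      obtain x where x: "N0 - e' \<le> x" "x \<le> N0 + e'" "(m y - x) * D - q y * f x = 0"
        using IVT2'[of "\<lambda>N. (m y - N) * D - q y * f N" "N0 + e'" 0 "N0 - e'", OF _ _ _ c] elim e' by auto
      have x0: "x > 0" using x e' by auto
      have "f x > 0" using strict_mono_onD[OF sm, of 0 x] x0 f0 by auto
      hence "x < m y" using x elim D by (smt (verit) mult_pos_pos mult_le_0_iff)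
      thus ?case using x x0 e' by (intro exI[of _ x]) auto
    qed
  qed
  thus ?thesis unfolding NTH_def N0_def .
qed

lemma cub_dpos:
  assumes "disc al be ga < 0"
  shows "3 * (rroot al be ga)^2 + 2 * al * rroot al be ga + be > 0"
proof -
  define r where "r = rroot al be ga"
  have cr: "cub al be ga r = 0" unfolding r_def using rroot_root[OF assms] .
  have "r^2 + (al + r) * r + (be + r * (al + r)) > 0"
    using quad_pos[OF disc_neg_quad[OF cr assms]] .
  thus ?thesis unfolding r_def[symmetric] by (simp add: power2_eq_square algebra_simps)
qed

lemma rroot_deriv:
  fixes al be ga :: "real \<Rightarrow> real"
  assumes dal: "(al has_real_derivative al') (at x)" and dbe: "(be has_real_derivative be') (at x)"
    and dga: "(ga has_real_derivative ga') (at x)"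
    and d: "disc (al x) (be x) (ga x) < 0"
  defines "r \<equiv> rroot (al x) (be x) (ga x)"
  shows "((\<lambda>y. rroot (al y) (be y) (ga y)) has_real_derivative
     - (al' * r^2 + be' * r + ga') / (3 * r^2 + 2 * al x * r + be x)) (at x)"
proof -
  define R where "R y = rroot (al y) (be y) (ga y)" for y
  have ca: "(al \<longlongrightarrow> al x) (at x)" "(be \<longlongrightarrow> be x) (at x)" "(ga \<longlongrightarrow> ga x) (at x)"
    using DERIV_continuous[OF dal] DERIV_continuous[OF dbe] DERIV_continuous[OF dga]
    by (simp_all add: continuous_at)
  have tR: "(R \<longlongrightarrow> r) (at x)" unfolding R_def r_def by (rule rroot_tendsto[OF ca d])
  have ed: "eventually (\<lambda>y. disc (al y) (be y) (ga y) < 0) (at x)"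
    using order_tendstoD(2)[OF disc_tendsto[OF ca] d] .
  define Q where "Q y = (R y)^2 + R y * r + r^2 + al y * (R y + r) + be y" for y
  define L where "L y = (al y - al x) * r^2 + (be y - be x) * r + (ga y - ga x)" for y
  have tQ: "(Q \<longlongrightarrow> 3 * r^2 + 2 * al x * r + be x) (at x)"
  proof -
    have "(Q \<longlongrightarrow> r^2 + r * r + r^2 + al x * (r + r) + be x) (at x)"
      unfolding Q_def by (intro tendsto_intros tR ca)
    thus ?thesis by (simp add: power2_eq_square algebra_simps)
  qed
  have Q0: "3 * r^2 + 2 * al x * r + be x \<noteq> 0" using cub_dpos[OF d] unfolding r_def by simp
  have cr: "cub (al x) (be x) (ga x) r = 0" unfolding r_def using rroot_root[OF d] .
  have tL: "((\<lambda>y. L y / (y - x)) \<longlongrightarrow> al' * r^2 + be' * r + ga') (at x)"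
  proof -
    have "((\<lambda>y. (al y - al x) / (y - x) * r^2 + (be y - be x) / (y - x) * r + (ga y - ga x) / (y - x))
        \<longlongrightarrow> al' * r^2 + be' * r + ga') (at x)"
      using dal dbe dga unfolding has_field_derivative_iff by (intro tendsto_intros)
    moreover have "(\<lambda>y. (al y - al x) / (y - x) * r^2 + (be y - be x) / (y - x) * r + (ga y - ga x) / (y - x))
      = (\<lambda>y. L y / (y - x))" unfolding L_def by (intro ext) (simp add: divide_inverse algebra_simps)
    ultimately show ?thesis by simp
  qed
  have ev: "eventually (\<lambda>y. (R y - R x) / (y - x) = - (L y / (y - x)) / Q y) (at x)"
    using ed order_tendstoD(2)[OF tQ] order_tendstoD(1)[OF tQ] cub_dpos[OF d]
  proof -
    have "eventually (\<lambda>y. Q y \<noteq> 0) (at x)"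
      using tendsto_imp_eventually_ne[OF tQ Q0] .
    with ed show ?thesis
    proof eventually_elim
      case (elim y)
      have cy: "cub (al y) (be y) (ga y) (R y) = 0" unfolding R_def using rroot_root[OF elim(1)] .
      have h: "(R y - r) * Q y = - L y"
        using cy cr unfolding Q_def L_def cub_def by (simp add: power2_eq_square power3_eq_cube algebra_simps)
      have e1: "R y - r = - L y / Q y" using h elim(2) by (metis nonzero_mult_div_cancel_right minus_divide_left)
      have rx: "R x = r" unfolding R_def r_def ..
      show ?case unfolding rx e1 by (simp add: divide_inverse algebra_simps)
    qed
  qed
  have "((\<lambda>y. - (L y / (y - x)) / Q y) \<longlongrightarrow> - (al' * r^2 + be' * r + ga') / (3 * r^2 + 2 * al x * r + be x)) (at x)"
    by (intro tendsto_intros tL tQ Q0)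
  hence "((\<lambda>y. (R y - R x) / (y - x)) \<longlongrightarrow> - (al' * r^2 + be' * r + ga') / (3 * r^2 + 2 * al x * r + be x)) (at x)"
    using tendsto_cong[OF ev] by blast
  thus ?thesis unfolding has_field_derivative_iff R_def .
qed

locale model =
  fixes f1 f2 df1 ddf1 df2 :: "real \<Rightarrow> real" and D g1 g2 :: real
  assumes D_pos: "0 < D" and g1_pos: "0 < g1" and g2_pos: "0 < g2"
    and f1_bdd: "bounded (f1 ` {0..})" and f2_bdd: "bounded (f2 ` {0..})"
    and f1_0: "f1 0 = 0" and f2_0: "f2 0 = 0"
    and f1_deriv: "\<forall>x\<ge>0. (f1 has_real_derivative df1 x) (at x within {0..})"
    and f2_deriv: "\<forall>x\<ge>0. (f2 has_real_derivative df2 x) (at x within {0..})"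
    and df2_cont: "continuous_on {0..} df2"
    and df1_pos: "\<forall>x\<ge>0. 0 < df1 x" and df2_pos: "\<forall>x\<ge>0. 0 < df2 x"
    and lim1: "D / g1 < Lim at_top f1" and lim2: "D / g2 < Lim at_top f2"
    and df1_deriv: "\<forall>x\<ge>0. (df1 has_real_derivative ddf1 x) (at x within {0..})"
    and ddf1_cont: "\<forall>x>0. isCont ddf1 x"
begin

lemma sm1: "strict_mono_on {0..} f1" and co1: "continuous_on {0..} f1"
  using smono_from_deriv[OF f1_deriv df1_pos] by auto
lemma sm2: "strict_mono_on {0..} f2" and co2: "continuous_on {0..} f2"
  using smono_from_deriv[OF f2_deriv df2_pos] by auto

lemma f1_at: "x > 0 \<Longrightarrow> (f1 has_real_derivative df1 x) (at x)"
  using deriv_at_pos f1_deriv by auto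
lemma df1_at: "x > 0 \<Longrightarrow> (df1 has_real_derivative ddf1 x) (at x)"
  using deriv_at_pos df1_deriv by auto
lemma f1_isCont: "x > 0 \<Longrightarrow> isCont f1 x"
  using DERIV_continuous[OF f1_at] by (simp add: continuous_at)
lemma df1_isCont: "x > 0 \<Longrightarrow> isCont df1 x"
  using DERIV_continuous[OF df1_at] by (simp add: continuous_at)
lemma f2_isCont: "x > 0 \<Longrightarrow> isCont f2 x"
proof -
  assume "x > 0"
  hence "(f2 has_real_derivative df2 x) (at x)" using deriv_at_pos f2_deriv by auto
  from DERIV_continuous[OF this] show ?thesis by (simp add: continuous_at)
qed
lemma df2_isCont: "x > 0 \<Longrightarrow> isCont df2 x"
proof -
  assume "x > 0"
  moreover have "interior {0::real..} = {0<..}" by (rule interior_Ici[of "-1"]) simp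
  ultimately show ?thesis using continuous_on_interior[OF df2_cont] by simp
qed

definition "PP d2 = lamZ f2 g2 d2"
definition "NN mu d2 = NTH f1 D (PP d2) mu"
definition "ZZ mu d1 d2 = (g2 / d2) * PP d2 * (g1 * f1 (NN mu d2) - d1)"
definition "p11 mu d1 d2 = - D - PP d2 * df1 (NN mu d2)"
definition "p12 mu d1 d2 = - f1 (NN mu d2)"
definition "p21 mu d1 d2 = g1 * PP d2 * df1 (NN mu d2)"
definition "p22 mu d1 d2 = g1 * f1 (NN mu d2) - d1 - ZZ mu d1 d2 * df2 (PP d2)"
definition "p23 mu d1 d2 = - f2 (PP d2)"
definition "p32 mu d1 d2 = g2 * ZZ mu d1 d2 * df2 (PP d2)"
definition "al mu d1 d2 = - (p11 mu d1 d2 + p22 mu d1 d2)"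
definition "be mu d1 d2 = p11 mu d1 d2 * p22 mu d1 d2 - p12 mu d1 d2 * p21 mu d1 d2 - p23 mu d1 d2 * p32 mu d1 d2"
definition "ga mu d1 d2 = p11 mu d1 d2 * p23 mu d1 d2 * p32 mu d1 d2"
definition "rr mu d1 d2 = rroot (al mu d1 d2) (be mu d1 d2) (ga mu d1 d2)"
definition "aa mu d1 d2 = - (al mu d1 d2 + rr mu d1 d2) / 2"

definition "P0 = PP D"

lemma P0: "P0 > 0" "f2 P0 = D / g2"
  unfolding P0_def PP_def lamZ_def using lvl_ex[OF sm2 co2 f2_0 f2_bdd lim2] D_pos g2_pos by auto

lemma lamP_D: "lamP f1 g1 D > 0" "f1 (lamP f1 g1 D) = D / g1"
  unfolding lamP_def using lvl_ex[OF sm1 co1 f1_0 f1_bdd lim1] D_pos g1_pos by auto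

lemma Neq_eq: "Neq f1 f2 D g1 g2 mu d1 d2 = NN mu d2"
  unfolding Neq_def NN_def NTH_def PP_def ..

lemma Zeq_eq: "Zeq f1 f2 D g1 g2 mu d1 d2 = ZZ mu d1 d2"
  unfolding Zeq_def ZZ_def Neq_eq PP_def ..

lemma jac_eq: "jac f1 f2 df1 df2 D g1 g2 d1 d2 (E2 f1 f2 D g1 g2 mu d1 d2) =
  vector [vector [p11 mu d1 d2, p12 mu d1 d2, 0], vector [p21 mu d1 d2, p22 mu d1 d2, p23 mu d1 d2],
          vector [0, p32 mu d1 d2, g2 * f2 (PP d2) - d2]]"
  unfolding jac_def E2_def Neq_eq Zeq_eq p11_def p12_def p21_def p22_def p23_def p32_def PP_def
  by (simp add: algebra_simps)

lemma muc1_eq: "muc1 f1 f2 D g1 g2 d1 d2 = lvl f1 (d1 / g1) + d1 * PP d2 / (D * g1)"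
  unfolding muc1_def lamP_def PP_def ..

context
  fixes F :: "'x filter" and m e1 e2 :: "'x \<Rightarrow> real" and mu0 :: real
  assumes tm: "(m \<longlongrightarrow> mu0) F" and te1: "(e1 \<longlongrightarrow> D) F" and te2: "(e2 \<longlongrightarrow> D) F" and mu0: "mu0 > 0"
begin

lemma tP: "((\<lambda>y. PP (e2 y)) \<longlongrightarrow> P0) F"
proof -
  have "((\<lambda>y. e2 y / g2) \<longlongrightarrow> f2 P0) F" unfolding P0(2) using g2_pos by (intro tendsto_intros te2) auto
  from lvl_tendsto[OF sm2 co2 P0(1) this] show ?thesis unfolding PP_def lamZ_def .
qed

lemma evP: "eventually (\<lambda>y. PP (e2 y) > 0 \<and> f2 (PP (e2 y)) = e2 y / g2) F"
proof -
  have "((\<lambda>y. e2 y / g2) \<longlongrightarrow> f2 P0) F" unfolding P0(2) using g2_pos by (intro tendsto_intros te2) auto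
  from lvl_eventually[OF sm2 co2 P0(1) this] show ?thesis unfolding PP_def lamZ_def .
qed

lemma tN: "((\<lambda>y. NN (m y) (e2 y)) \<longlongrightarrow> NN mu0 D) F"
  unfolding NN_def P0_def[symmetric] using NTH_tendsto[OF sm1 co1 f1_0 D_pos P0(1) mu0 tP tm] .

lemma N0: "NN mu0 D > 0" "NN mu0 D < mu0" "(mu0 - NN mu0 D) * D - P0 * f1 (NN mu0 D) = 0"
  unfolding NN_def P0_def[symmetric] using NTH_prop[OF sm1 co1 f1_0 D_pos P0(1) mu0] by auto

lemma tatoms:
  "((\<lambda>y. f1 (NN (m y) (e2 y))) \<longlongrightarrow> f1 (NN mu0 D)) F"
  "((\<lambda>y. df1 (NN (m y) (e2 y))) \<longlongrightarrow> df1 (NN mu0 D)) F"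
  "((\<lambda>y. ddf1 (NN (m y) (e2 y))) \<longlongrightarrow> ddf1 (NN mu0 D)) F"
  "((\<lambda>y. f2 (PP (e2 y))) \<longlongrightarrow> f2 P0) F"
  "((\<lambda>y. df2 (PP (e2 y))) \<longlongrightarrow> df2 P0) F"
  using isCont_tendsto_compose[OF f1_isCont[OF N0(1)] tN] isCont_tendsto_compose[OF df1_isCont[OF N0(1)] tN]
    isCont_tendsto_compose[OF ddf1_cont[rule_format, OF N0(1)] tN]
    isCont_tendsto_compose[OF f2_isCont[OF P0(1)] tP] isCont_tendsto_compose[OF df2_isCont[OF P0(1)] tP]
  by auto

lemma tcoef:
  "((\<lambda>y. al (m y) (e1 y) (e2 y)) \<longlongrightarrow> al mu0 D D) F"
  "((\<lambda>y. be (m y) (e1 y) (e2 y)) \<longlongrightarrow> be mu0 D D) F"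
  "((\<lambda>y. ga (m y) (e1 y) (e2 y)) \<longlongrightarrow> ga mu0 D D) F"
  "((\<lambda>y. p11 (m y) (e1 y) (e2 y)) \<longlongrightarrow> p11 mu0 D D) F"
  "((\<lambda>y. p12 (m y) (e1 y) (e2 y)) \<longlongrightarrow> p12 mu0 D D) F"
  "((\<lambda>y. p21 (m y) (e1 y) (e2 y)) \<longlongrightarrow> p21 mu0 D D) F"
  "((\<lambda>y. p23 (m y) (e1 y) (e2 y)) \<longlongrightarrow> p23 mu0 D D) F"
  "((\<lambda>y. p32 (m y) (e1 y) (e2 y)) \<longlongrightarrow> p32 mu0 D D) F"
  unfolding al_def be_def ga_def p11_def p12_def p21_def p22_def p23_def p32_def ZZ_def P0_def[symmetric]
  by (intro tendsto_intros tatoms tP te1 te2; use D_pos in simp)+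

end

end

context model begin

lemma cub_base:
  assumes mu: "mu > 0"
  shows "cub (al mu D D) (be mu D D) (ga mu D D) (- D) = 0"
proof -
  have h: "f2 (PP D) = D / g2" using P0 unfolding P0_def by simp
  show ?thesis
    unfolding cub_def al_def be_def ga_def p11_def p12_def p21_def p22_def p23_def p32_def ZZ_def h
    using D_pos g2_pos by (simp add: field_simps power2_eq_square power3_eq_cube)
qed

lemma al_base:
  assumes A: "Afun f1 f2 df1 df2 D g1 g2 mu = 0"
  shows "al mu D D = D"
proof -
  have "ZZ mu D D * (D / (g2 * PP D) - df2 (PP D)) - PP D * df1 (NN mu D) = 0"
    using A unfolding Afun_def Zeq_eq Neq_eq PP_def .
  hence h: "ZZ mu D D * (D / (g2 * PP D)) - ZZ mu D D * df2 (PP D) - PP D * df1 (NN mu D) = 0"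
    by (simp add: right_diff_distrib)
  have "PP D > 0" using P0 unfolding P0_def by simp
  hence k: "ZZ mu D D * (D / (g2 * PP D)) = g1 * f1 (NN mu D) - D"
    unfolding ZZ_def using D_pos g2_pos by (simp add: field_simps)
  have "g1 * f1 (NN mu D) - D - ZZ mu D D * df2 (PP D) - PP D * df1 (NN mu D) = 0"
    using h unfolding k .
  thus ?thesis unfolding al_def p11_def p22_def by simp
qed

definition "Nd mu d1 d2 = D / (D + PP d2 * df1 (NN mu d2))"
definition "ud mu d1 d2 = df1 (NN mu d2) * Nd mu d1 d2"
definition "wd mu d1 d2 = ddf1 (NN mu d2) * Nd mu d1 d2"
definition "ZZd mu d1 d2 = (g2 / d2) * PP d2 * (g1 * ud mu d1 d2)"
definition "p11d mu d1 d2 = - PP d2 * wd mu d1 d2"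
definition "p12d mu d1 d2 = - ud mu d1 d2"
definition "p21d mu d1 d2 = g1 * PP d2 * wd mu d1 d2"
definition "p22d mu d1 d2 = g1 * ud mu d1 d2 - ZZd mu d1 d2 * df2 (PP d2)"
definition "p32d mu d1 d2 = g2 * ZZd mu d1 d2 * df2 (PP d2)"
definition "ald mu d1 d2 = - (p11d mu d1 d2 + p22d mu d1 d2)"
definition "bed mu d1 d2 = p11d mu d1 d2 * p22 mu d1 d2 + p11 mu d1 d2 * p22d mu d1 d2
   - (p12d mu d1 d2 * p21 mu d1 d2 + p12 mu d1 d2 * p21d mu d1 d2) - p23 mu d1 d2 * p32d mu d1 d2"
definition "gad mu d1 d2 = p11d mu d1 d2 * p23 mu d1 d2 * p32 mu d1 d2 + p11 mu d1 d2 * p23 mu d1 d2 * p32d mu d1 d2"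
definition "rrd mu d1 d2 = - (ald mu d1 d2 * (rr mu d1 d2)^2 + bed mu d1 d2 * rr mu d1 d2 + gad mu d1 d2)
   / (3 * (rr mu d1 d2)^2 + 2 * al mu d1 d2 * rr mu d1 d2 + be mu d1 d2)"
definition "aad mu d1 d2 = - (ald mu d1 d2 + rrd mu d1 d2) / 2"

context
  fixes d1 d2 mu :: real
  assumes Pg: "PP d2 > 0" and mu: "mu > 0" and d2pos: "d2 > 0"
begin

lemma Npos: "NN mu d2 > 0"
  unfolding NN_def using NTH_prop[OF sm1 co1 f1_0 D_pos Pg mu] by auto

lemma dN: "((\<lambda>mu. NN mu d2) has_real_derivative Nd mu d1 d2) (at mu)"
proof -
  define q where "q = PP d2"
  have q: "q > 0" using Pg q_def by simp
  have der: "((\<lambda>N. N + q * f1 N / D) has_real_derivative (1 + q * df1 (NN mu d2) / D)) (at (NN mu d2))"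
    using D_pos by (auto intro!: derivative_eq_intros f1_at Npos)
  have ne: "1 + q * df1 (NN mu d2) / D \<noteq> 0" using q df1_pos Npos D_pos
    by (smt (verit) divide_pos_pos less_eq_real_def mult_pos_pos)
  have inj: "(\<lambda>N. N + q * f1 N / D) (NN y d2) = y" if "0 < y" "y < mu + 1" for y
  proof -
    have "(y - NN y d2) * D - q * f1 (NN y d2) = 0"
      unfolding NN_def q_def using NTH_prop[OF sm1 co1 f1_0 D_pos Pg that(1)] by auto
    thus ?thesis using D_pos by (simp add: field_simps)
  qed
  have cont: "isCont (\<lambda>mu. NN mu d2) mu"
    unfolding isCont_def NN_def using NTH_tendsto[OF sm1 co1 f1_0 D_pos Pg mu tendsto_const tendsto_ident_at] .
  have "((\<lambda>mu. NN mu d2) has_real_derivative inverse (1 + q * df1 (NN mu d2) / D)) (at mu)"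
    by (rule DERIV_inverse_function[OF der ne _ _ inj cont, of 0]) (use mu in auto)
  moreover have "inverse (1 + q * df1 (NN mu d2) / D) = Nd mu d1 d2"
    unfolding Nd_def q_def using D_pos by (simp add: field_simps)
  ultimately show ?thesis by simp
qed

lemma du: "((\<lambda>mu. f1 (NN mu d2)) has_real_derivative ud mu d1 d2) (at mu)"
  unfolding ud_def by (rule DERIV_chain2[OF f1_at[OF Npos] dN])

lemma dw: "((\<lambda>mu. df1 (NN mu d2)) has_real_derivative wd mu d1 d2) (at mu)"
  unfolding wd_def by (rule DERIV_chain2[OF df1_at[OF Npos] dN])

lemma dp:
  "((\<lambda>mu. p11 mu d1 d2) has_real_derivative p11d mu d1 d2) (at mu)"
  "((\<lambda>mu. p12 mu d1 d2) has_real_derivative p12d mu d1 d2) (at mu)"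
  "((\<lambda>mu. p21 mu d1 d2) has_real_derivative p21d mu d1 d2) (at mu)"
  "((\<lambda>mu. ZZ mu d1 d2) has_real_derivative ZZd mu d1 d2) (at mu)"
  "((\<lambda>mu. p23 mu d1 d2) has_real_derivative 0) (at mu)"
  unfolding p11_def p11d_def p12_def p12d_def p21_def p21d_def ZZ_def ZZd_def p23_def
  using d2pos by (auto intro!: derivative_eq_intros du dw)

lemma dp2:
  "((\<lambda>mu. p22 mu d1 d2) has_real_derivative p22d mu d1 d2) (at mu)"
  "((\<lambda>mu. p32 mu d1 d2) has_real_derivative p32d mu d1 d2) (at mu)"
  unfolding p22_def p22d_def p32_def p32d_def
  by (auto intro!: derivative_eq_intros du dp)

lemma dcoef:
  "((\<lambda>mu. al mu d1 d2) has_real_derivative ald mu d1 d2) (at mu)"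
  "((\<lambda>mu. be mu d1 d2) has_real_derivative bed mu d1 d2) (at mu)"
  "((\<lambda>mu. ga mu d1 d2) has_real_derivative gad mu d1 d2) (at mu)"
  unfolding al_def ald_def be_def bed_def ga_def gad_def
  by (auto intro!: derivative_eq_intros dp dp2 simp: algebra_simps)

lemma daa:
  assumes d: "disc (al mu d1 d2) (be mu d1 d2) (ga mu d1 d2) < 0"
  shows "((\<lambda>mu. aa mu d1 d2) has_real_derivative aad mu d1 d2) (at mu)"
proof -
  have "((\<lambda>mu. rr mu d1 d2) has_real_derivative rrd mu d1 d2) (at mu)"
    unfolding rr_def rrd_def using rroot_deriv[OF dcoef d] .
  thus ?thesis unfolding aa_def aad_def
    by (auto intro!: derivative_eq_intros dcoef)
qed

end

end

context model begin

context
  fixes mu0 :: real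
  assumes mu0: "mu0 > 0" and A0: "Afun f1 f2 df1 df2 D g1 g2 mu0 = 0"
    and hypA: "D / (g2 * lamZ f2 g2 D) > df2 (lamZ f2 g2 D)"
begin

lemma hypA': "D > g2 * P0 * df2 P0"
proof -
  have "D / (g2 * P0) > df2 P0" using hypA unfolding P0_def PP_def .
  thus ?thesis using P0(1) g2_pos by (simp add: field_simps)
qed

lemma N0pos: "NN mu0 D > 0" using Npos[of D mu0] P0 mu0 D_pos unfolding P0_def by simp

lemma Z0pos: "ZZ mu0 D D > 0"
proof -
  have "ZZ mu0 D D * (D / (g2 * PP D) - df2 (PP D)) - PP D * df1 (NN mu0 D) = 0"
    using A0 unfolding Afun_def Zeq_eq Neq_eq PP_def .
  moreover have "PP D * df1 (NN mu0 D) > 0" using P0 N0pos df1_pos unfolding P0_def by simp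
  moreover have "D / (g2 * PP D) - df2 (PP D) > 0" using hypA unfolding PP_def by simp
  ultimately show ?thesis by (smt (verit) mult_nonpos_nonneg)
qed

lemma base_vals:
  "al mu0 D D = D" "ga mu0 D D = be mu0 D D * D" "ga mu0 D D > 0" "be mu0 D D > 0"
  "disc (al mu0 D D) (be mu0 D D) (ga mu0 D D) < 0" "rr mu0 D D = - D" "aa mu0 D D = 0"
  "p11 mu0 D D < 0" "p12 mu0 D D < 0" "p21 mu0 D D > 0" "p23 mu0 D D < 0" "p32 mu0 D D > 0"
proof -
  show al0: "al mu0 D D = D" using al_base[OF A0] .
  have c: "cub (al mu0 D D) (be mu0 D D) (ga mu0 D D) (- D) = 0" using cub_base[OF mu0] .
  show gb: "ga mu0 D D = be mu0 D D * D" using c unfolding al0 cub_def by (simp add: power2_eq_square power3_eq_cube)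
  have P: "PP D > 0" "f2 (PP D) = D / g2" using P0 unfolding P0_def by auto
  show s1: "p11 mu0 D D < 0" unfolding p11_def using D_pos P df1_pos N0pos
    by (smt (verit) mult_pos_pos)
  show "p12 mu0 D D < 0" unfolding p12_def using strict_mono_onD[OF sm1, of 0 "NN mu0 D"] f1_0 N0pos by simp
  show "p21 mu0 D D > 0" unfolding p21_def using g1_pos P df1_pos N0pos by simp
  show s2: "p23 mu0 D D < 0" unfolding p23_def using P D_pos g2_pos by simp
  show s3: "p32 mu0 D D > 0" unfolding p32_def using g2_pos Z0pos df2_pos P by simp
  show g0: "ga mu0 D D > 0" unfolding ga_def using s1 s2 s3 by (simp add: mult_neg_neg)
  show b0: "be mu0 D D > 0" using g0 gb D_pos by (simp add: zero_less_mult_iff)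
  have "disc (al mu0 D D) (be mu0 D D) (ga mu0 D D) = - 4 * be mu0 D D * (be mu0 D D + D^2)^2"
    unfolding al0 gb disc_def by (simp add: power2_eq_square power3_eq_cube algebra_simps)
  moreover have "be mu0 D D + D^2 > 0" using b0 by (simp add: add_pos_nonneg)
  ultimately show d0: "disc (al mu0 D D) (be mu0 D D) (ga mu0 D D) < 0" using b0 D_pos
    by (simp add: mult_pos_pos zero_less_mult_iff)
  show r0: "rr mu0 D D = - D" unfolding rr_def using rroot_eq[OF c d0] .
  show "aa mu0 D D = 0" unfolding aa_def r0 al0 by simp
qed

lemma Nd0: "Nd mu0 D D > 0"
proof -
  have "df1 (NN mu0 D) > 0" using df1_pos N0pos by simp
  thus ?thesis unfolding Nd_def using D_pos P0 unfolding P0_def by (simp add: add_pos_pos)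
qed

lemma rrd0: "rrd mu0 D D = 0"
proof -
  have P: "f2 (PP D) = D / g2" using P0 unfolding P0_def by auto
  have "ald mu0 D D * D^2 - bed mu0 D D * D + gad mu0 D D = 0"
    unfolding ald_def bed_def gad_def p11d_def p12d_def p21d_def p22d_def p32d_def ZZd_def
      p11_def p12_def p21_def p22_def p23_def p32_def ZZ_def P
    using D_pos g2_pos by (simp add: field_simps power2_eq_square)
  thus ?thesis unfolding rrd_def base_vals(6) by (simp add: power2_eq_square)
qed

lemma aad0:
  assumes dd: "ddf1 (NN mu0 D) < 0"
  shows "aad mu0 D D > 0"
proof -
  have e: "ald mu0 D D = Nd mu0 D D * (P0 * ddf1 (NN mu0 D) - g1 * df1 (NN mu0 D) * (D - g2 * P0 * df2 P0) / D)"
    unfolding ald_def p11d_def p22d_def ZZd_def ud_def wd_def P0_def using D_pos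
    by (simp add: field_simps)
  have "g1 * df1 (NN mu0 D) * (D - g2 * P0 * df2 P0) / D > 0"
    using g1_pos df1_pos N0pos hypA' D_pos by simp
  moreover have "P0 * ddf1 (NN mu0 D) < 0" using P0 dd by (simp add: mult_pos_neg)
  ultimately have "ald mu0 D D < 0" unfolding e using Nd0 by (simp add: mult_pos_neg)
  thus ?thesis unfolding aad_def rrd0 by simp
qed

end

end

context model begin

context
  fixes F :: "'x filter" and m e1 e2 :: "'x \<Rightarrow> real" and mu0 :: real
  assumes tm: "(m \<longlongrightarrow> mu0) F" and te1: "(e1 \<longlongrightarrow> D) F" and te2: "(e2 \<longlongrightarrow> D) F" and mu0: "mu0 > 0"
    and A0: "Afun f1 f2 df1 df2 D g1 g2 mu0 = 0"
    and hypA: "D / (g2 * lamZ f2 g2 D) > df2 (lamZ f2 g2 D)"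
begin

lemmas tc = tcoef[OF tm te1 te2 mu0]
lemmas ta = tatoms[OF tm te1 te2 mu0]
lemmas tP' = tP[OF tm te1 te2 mu0]
lemmas bv = base_vals[OF mu0 A0 hypA]

lemma tder:
  "((\<lambda>y. ald (m y) (e1 y) (e2 y)) \<longlongrightarrow> ald mu0 D D) F"
  "((\<lambda>y. bed (m y) (e1 y) (e2 y)) \<longlongrightarrow> bed mu0 D D) F"
  "((\<lambda>y. gad (m y) (e1 y) (e2 y)) \<longlongrightarrow> gad mu0 D D) F"
proof -
  have "df1 (NN mu0 D) > 0" using df1_pos N0pos[OF mu0 A0 hypA] by simp
  hence ne: "D + P0 * df1 (NN mu0 D) \<noteq> 0" using D_pos P0 by (smt (verit) mult_pos_pos)
  show "((\<lambda>y. ald (m y) (e1 y) (e2 y)) \<longlongrightarrow> ald mu0 D D) F"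
    "((\<lambda>y. bed (m y) (e1 y) (e2 y)) \<longlongrightarrow> bed mu0 D D) F"
    "((\<lambda>y. gad (m y) (e1 y) (e2 y)) \<longlongrightarrow> gad mu0 D D) F"
  unfolding ald_def bed_def gad_def p11d_def p12d_def p21d_def p22d_def p32d_def ZZd_def ud_def wd_def Nd_def
    p11_def p12_def p21_def p22_def p23_def p32_def ZZ_def P0_def[symmetric]
  by (intro tendsto_intros ta tP' te1 te2; use D_pos ne in simp)+
qed

lemma trr: "((\<lambda>y. rr (m y) (e1 y) (e2 y)) \<longlongrightarrow> rr mu0 D D) F"
  unfolding rr_def by (rule rroot_tendsto[OF tc(1-3) bv(5)])

lemma taa: "((\<lambda>y. aa (m y) (e1 y) (e2 y)) \<longlongrightarrow> 0) F"
proof -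
  have "((\<lambda>y. aa (m y) (e1 y) (e2 y)) \<longlongrightarrow> aa mu0 D D) F"
    unfolding aa_def by (intro tendsto_intros tc trr) simp
  thus ?thesis using bv(7) by simp
qed

lemma taad: "((\<lambda>y. aad (m y) (e1 y) (e2 y)) \<longlongrightarrow> aad mu0 D D) F"
proof -
  have "3 * (rr mu0 D D)^2 + 2 * al mu0 D D * rr mu0 D D + be mu0 D D > 0"
    unfolding rr_def using cub_dpos[OF bv(5)] .
  hence ne: "3 * (rr mu0 D D)^2 + 2 * al mu0 D D * rr mu0 D D + be mu0 D D \<noteq> 0" by simp
  show ?thesis unfolding aad_def rrd_def
    by (intro tendsto_intros tc trr tder ne) simp
qed

lemma tmuc1: "((\<lambda>y. muc1 f1 f2 D g1 g2 (e1 y) (e2 y)) \<longlongrightarrow> muc1 f1 f2 D g1 g2 D D) F"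
proof -
  have t1: "((\<lambda>y. e1 y / g1) \<longlongrightarrow> f1 (lamP f1 g1 D)) F"
    unfolding lamP_D(2) using g1_pos by (intro tendsto_intros te1) auto
  have "((\<lambda>y. lvl f1 (e1 y / g1)) \<longlongrightarrow> lamP f1 g1 D) F"
    using lvl_tendsto[OF sm1 co1 lamP_D(1) t1] .
  hence "((\<lambda>y. lvl f1 (e1 y / g1) + e1 y * PP (e2 y) / (D * g1)) \<longlongrightarrow> lamP f1 g1 D + D * P0 / (D * g1)) F"
    using D_pos g1_pos by (intro tendsto_intros te1 tP') auto
  thus ?thesis unfolding muc1_eq P0_def muc1_def lamP_def PP_def .
qed

end

end

context model begin

lemma eig_good:
  assumes Pg: "PP d2 > 0" "f2 (PP d2) = d2 / g2"
    and nz: "p11 mu d1 d2 \<noteq> 0" "p12 mu d1 d2 \<noteq> 0" "p21 mu d1 d2 \<noteq> 0" "p23 mu d1 d2 \<noteq> 0" "p32 mu d1 d2 \<noteq> 0"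
    and d: "disc (al mu d1 d2) (be mu d1 d2) (ga mu d1 d2) < 0" and g: "ga mu d1 d2 > 0"
  shows "\<exists>\<omega>. rr mu d1 d2 < 0 \<and> \<omega> \<noteq> 0 \<and> eigenvalues (jac f1 f2 df1 df2 D g1 g2 d1 d2 (E2 f1 f2 D g1 g2 mu d1 d2))
     = {complex_of_real (rr mu d1 d2), Complex (aa mu d1 d2) \<omega>, Complex (aa mu d1 d2) (- \<omega>)}"
proof -
  have z: "g2 * f2 (PP d2) - d2 = 0" using Pg g2_pos by simp
  have d': "disc (-(p11 mu d1 d2 + p22 mu d1 d2)) (p11 mu d1 d2 * p22 mu d1 d2 - p12 mu d1 d2 * p21 mu d1 d2 - p23 mu d1 d2 * p32 mu d1 d2)
     (p11 mu d1 d2 * p23 mu d1 d2 * p32 mu d1 d2) < 0" using d unfolding al_def be_def ga_def .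
  have g': "p11 mu d1 d2 * p23 mu d1 d2 * p32 mu d1 d2 > 0" using g unfolding ga_def .
  show ?thesis unfolding jac_eq z rr_def aa_def al_def be_def ga_def
    using eig_struct[OF nz d' g'] .
qed

lemma main_model:
  assumes gt: "muc2 > muc1 f1 f2 D g1 g2 D D"
    and A0: "Afun f1 f2 df1 df2 D g1 g2 muc2 = 0"
    and hypA: "D / (g2 * lamZ f2 g2 D) > df2 (lamZ f2 g2 D)"
  shows
    "(\<exists>\<delta>>0. \<exists>\<rho>>0. \<forall>D1 D2. 0 < D1 \<longrightarrow> 0 < D2 \<longrightarrow> dist (D1, D2) (D, D) < \<rho> \<longrightarrow>
        (\<forall>mu\<in>{muc2 - \<delta>..muc2 + \<delta>}.
           muc1 f1 f2 D g1 g2 D1 D2 < mu \<and>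
           (\<exists>a r \<omega>. r < 0 \<and> \<omega> \<noteq> 0 \<and>
              eigenvalues (jac f1 f2 df1 df2 D g1 g2 D1 D2 (E2 f1 f2 D g1 g2 mu D1 D2))
                = {complex_of_real r, Complex a \<omega>, Complex a (- \<omega>)})))
   \<and> (ddf1 (Neq f1 f2 D g1 g2 muc2 D D) < 0 \<longrightarrow>
      (\<exists>\<delta>>0. \<exists>\<rho>>0. \<forall>D1 D2. 0 < D1 \<longrightarrow> 0 < D2 \<longrightarrow> dist (D1, D2) (D, D) < \<rho> \<longrightarrow>
        (\<forall>mu\<in>{muc2 - \<delta>..muc2 + \<delta>}. muc1 f1 f2 D g1 g2 D1 D2 < mu) \<and>
        (\<exists>a a' :: real \<Rightarrow> real.
           (\<forall>mu\<in>{muc2 - \<delta>..muc2 + \<delta>}.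
              (\<exists>r \<omega>. r < 0 \<and> \<omega> \<noteq> 0 \<and>
                 eigenvalues (jac f1 f2 df1 df2 D g1 g2 D1 D2 (E2 f1 f2 D g1 g2 mu D1 D2))
                   = {complex_of_real r, Complex (a mu) \<omega>, Complex (a mu) (- \<omega>)}) \<and>
              (a has_real_derivative a' mu) (at mu within {muc2 - \<delta>..muc2 + \<delta>}) \<and>
              0 < a' mu) \<and>
           (\<exists>mus\<in>{muc2 - \<delta><..<muc2 + \<delta>}. a mus = 0))))"
proof -
  have mc0: "muc1 f1 f2 D g1 g2 D D > 0"
    unfolding muc1_def using lamP_D(1) D_pos g1_pos P0(1) unfolding P0_def PP_def
    by (simp add: add_pos_pos)
  hence mu0: "muc2 > 0" using gt by simp
  define b0 where "b0 = (muc2, D, D)"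
  define F where "F = nhds b0"
  define m where "m y = fst y" for y :: "real \<times> real \<times> real"
  define e1 where "e1 y = fst (snd y)" for y :: "real \<times> real \<times> real"
  define e2 where "e2 y = snd (snd y)" for y :: "real \<times> real \<times> real"
  have tid: "((\<lambda>y. y) \<longlongrightarrow> b0) F" unfolding F_def by (rule filterlim_ident)
  have tm: "(m \<longlongrightarrow> muc2) F" unfolding m_def using tendsto_fst[OF tid] b0_def by simp
  have te1: "(e1 \<longlongrightarrow> D) F" unfolding e1_def using tendsto_fst[OF tendsto_snd[OF tid]] b0_def by simp
  have te2: "(e2 \<longlongrightarrow> D) F" unfolding e2_def using tendsto_snd[OF tendsto_snd[OF tid]] b0_def by simp
  note tc = tcoef[OF tm te1 te2 mu0]
  note bv = base_vals[OF mu0 A0 hypA]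
  define Good where "Good y \<longleftrightarrow> muc1 f1 f2 D g1 g2 (e1 y) (e2 y) < m y \<and>
      disc (al (m y) (e1 y) (e2 y)) (be (m y) (e1 y) (e2 y)) (ga (m y) (e1 y) (e2 y)) < 0 \<and>
      ga (m y) (e1 y) (e2 y) > 0 \<and> p11 (m y) (e1 y) (e2 y) \<noteq> 0 \<and> p12 (m y) (e1 y) (e2 y) \<noteq> 0 \<and>
      p21 (m y) (e1 y) (e2 y) \<noteq> 0 \<and> p23 (m y) (e1 y) (e2 y) \<noteq> 0 \<and> p32 (m y) (e1 y) (e2 y) \<noteq> 0 \<and>
      PP (e2 y) > 0 \<and> f2 (PP (e2 y)) = e2 y / g2 \<and> e2 y > 0 \<and> m y > 0" for y
  have evG: "eventually Good F"
  proof -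
    have a: "((\<lambda>y. m y - muc1 f1 f2 D g1 g2 (e1 y) (e2 y)) \<longlongrightarrow> muc2 - muc1 f1 f2 D g1 g2 D D) F"
      by (intro tendsto_intros tm tmuc1[OF tm te1 te2 mu0 A0 hypA])
    have "eventually (\<lambda>y. 0 < m y - muc1 f1 f2 D g1 g2 (e1 y) (e2 y)) F"
      using order_tendstoD(1)[OF a, of 0] gt by simp
    moreover have "eventually (\<lambda>y. disc (al (m y) (e1 y) (e2 y)) (be (m y) (e1 y) (e2 y)) (ga (m y) (e1 y) (e2 y)) < 0) F"
      using order_tendstoD(2)[OF disc_tendsto[OF tc(1-3)] bv(5)] .
    moreover have "eventually (\<lambda>y. ga (m y) (e1 y) (e2 y) > 0) F" using order_tendstoD(1)[OF tc(3) bv(3)] .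
    moreover have "eventually (\<lambda>y. p11 (m y) (e1 y) (e2 y) \<noteq> 0) F"
      using tendsto_imp_eventually_ne[OF tc(4)] bv(8) by simp
    moreover have "eventually (\<lambda>y. p12 (m y) (e1 y) (e2 y) \<noteq> 0) F"
      using tendsto_imp_eventually_ne[OF tc(5)] bv(9) by simp
    moreover have "eventually (\<lambda>y. p21 (m y) (e1 y) (e2 y) \<noteq> 0) F"
      using tendsto_imp_eventually_ne[OF tc(6)] bv(10) by simp
    moreover have "eventually (\<lambda>y. p23 (m y) (e1 y) (e2 y) \<noteq> 0) F"
      using tendsto_imp_eventually_ne[OF tc(7)] bv(11) by simp
    moreover have "eventually (\<lambda>y. p32 (m y) (e1 y) (e2 y) \<noteq> 0) F"
      using tendsto_imp_eventually_ne[OF tc(8)] bv(12) by simp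
    moreover have "eventually (\<lambda>y. PP (e2 y) > 0 \<and> f2 (PP (e2 y)) = e2 y / g2) F"
      using evP[OF tm te1 te2 mu0] .
    moreover have "eventually (\<lambda>y. e2 y > 0) F" using order_tendstoD(1)[OF te2 D_pos] .
    moreover have "eventually (\<lambda>y. m y > 0) F" using order_tendstoD(1)[OF tm mu0] .
    ultimately show ?thesis unfolding Good_def by eventually_elim auto
  qed
  have box: "dist (mu, d1, d2) b0 < e" if "e > 0" "\<bar>mu - muc2\<bar> \<le> e/3" "dist (d1, d2) (D, D) < e/3" for e mu d1 d2
  proof -
    have "dist (mu, d1, d2) b0 = sqrt ((dist mu muc2)^2 + (dist (d1, d2) (D, D))^2)"
      unfolding b0_def dist_Pair_Pair[of mu "(d1, d2)"] ..
    also have "\<dots> \<le> dist mu muc2 + dist (d1, d2) (D, D)" by (rule sqrt_sum_squares_le_sum) auto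
    also have "\<dots> < e" using that by (simp add: dist_real_def)
    finally show ?thesis .
  qed
  have Gsimp: "Good (mu, d1, d2) \<longleftrightarrow> muc1 f1 f2 D g1 g2 d1 d2 < mu \<and>
      disc (al mu d1 d2) (be mu d1 d2) (ga mu d1 d2) < 0 \<and>
      ga mu d1 d2 > 0 \<and> p11 mu d1 d2 \<noteq> 0 \<and> p12 mu d1 d2 \<noteq> 0 \<and>
      p21 mu d1 d2 \<noteq> 0 \<and> p23 mu d1 d2 \<noteq> 0 \<and> p32 mu d1 d2 \<noteq> 0 \<and>
      PP d2 > 0 \<and> f2 (PP d2) = d2 / g2 \<and> d2 > 0 \<and> mu > 0" for mu d1 d2
    unfolding Good_def m_def e1_def e2_def by simp
  have eigG: "\<exists>\<omega>. rr mu d1 d2 < 0 \<and> \<omega> \<noteq> 0 \<and> eigenvalues (jac f1 f2 df1 df2 D g1 g2 d1 d2 (E2 f1 f2 D g1 g2 mu d1 d2))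
     = {complex_of_real (rr mu d1 d2), Complex (aa mu d1 d2) \<omega>, Complex (aa mu d1 d2) (- \<omega>)}"
    if "Good (mu, d1, d2)" for mu d1 d2
    using that unfolding Gsimp by (intro eig_good) auto
  show ?thesis
  proof (intro conjI impI)
    obtain e where e: "e > 0" "\<forall>y. dist y b0 < e \<longrightarrow> Good y"
      using evG unfolding F_def eventually_nhds_metric by blast
    have P1: "\<forall>D1 D2. 0 < D1 \<longrightarrow> 0 < D2 \<longrightarrow> dist (D1, D2) (D, D) < e/3 \<longrightarrow>
        (\<forall>mu\<in>{muc2 - e/3..muc2 + e/3}.
           muc1 f1 f2 D g1 g2 D1 D2 < mu \<and>
           (\<exists>a r \<omega>. r < 0 \<and> \<omega> \<noteq> 0 \<and>
              eigenvalues (jac f1 f2 df1 df2 D g1 g2 D1 D2 (E2 f1 f2 D g1 g2 mu D1 D2))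
                = {complex_of_real r, Complex a \<omega>, Complex a (- \<omega>)}))"
    proof (intro allI impI ballI conjI)
      fix D1 D2 mu assume h: "dist (D1, D2) (D, D) < e / 3" "mu \<in> {muc2 - e/3..muc2 + e/3}"
      have a: "\<bar>mu - muc2\<bar> \<le> e/3" by (intro abs_leI) (use h(2) in auto)
      have G: "Good (mu, D1, D2)" using e(2) box[OF e(1) a h(1)] by blast
      show "muc1 f1 f2 D g1 g2 D1 D2 < mu" using G unfolding Gsimp by simp
      show "\<exists>a r \<omega>. r < 0 \<and> \<omega> \<noteq> 0 \<and>
              eigenvalues (jac f1 f2 df1 df2 D g1 g2 D1 D2 (E2 f1 f2 D g1 g2 mu D1 D2))
                = {complex_of_real r, Complex a \<omega>, Complex a (- \<omega>)}"
        using eigG[OF G] by blast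
    qed
    show "\<exists>\<delta>>0. \<exists>\<rho>>0. \<forall>D1 D2. 0 < D1 \<longrightarrow> 0 < D2 \<longrightarrow> dist (D1, D2) (D, D) < \<rho> \<longrightarrow>
        (\<forall>mu\<in>{muc2 - \<delta>..muc2 + \<delta>}.
           muc1 f1 f2 D g1 g2 D1 D2 < mu \<and>
           (\<exists>a r \<omega>. r < 0 \<and> \<omega> \<noteq> 0 \<and>
              eigenvalues (jac f1 f2 df1 df2 D g1 g2 D1 D2 (E2 f1 f2 D g1 g2 mu D1 D2))
                = {complex_of_real r, Complex a \<omega>, Complex a (- \<omega>)}))"
      using P1 e(1) by (intro exI[of _ "e/3"] conjI) auto
  next
    assume dd: "ddf1 (Neq f1 f2 D g1 g2 muc2 D D) < 0"
    have a0: "aad muc2 D D > 0" using aad0[OF mu0 A0 hypA] dd unfolding Neq_eq by simp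
    define c where "c = aad muc2 D D / 2"
    have c: "c > 0" "c < aad muc2 D D" using a0 unfolding c_def by auto
    have "eventually (\<lambda>y. Good y \<and> aad (m y) (e1 y) (e2 y) > c) F"
      using evG order_tendstoD(1)[OF taad[OF tm te1 te2 mu0 A0 hypA] c(2)] by eventually_elim auto
    then obtain e where e: "e > 0" "\<forall>y. dist y b0 < e \<longrightarrow> Good y \<and> aad (m y) (e1 y) (e2 y) > c"
      unfolding F_def eventually_nhds_metric by blast
    define \<delta> where "\<delta> = e / 3"
    have \<delta>: "\<delta> > 0" unfolding \<delta>_def using e by simp
    have "eventually (\<lambda>y. \<bar>aa (m y) (e1 y) (e2 y)\<bar> < c * \<delta>) F"
      using taa[OF tm te1 te2 mu0 A0 hypA] c \<delta> unfolding tendsto_iff dist_real_def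
      by (auto simp: mult_pos_pos)
    then obtain e2' where e2': "e2' > 0" "\<forall>y. dist y b0 < e2' \<longrightarrow> \<bar>aa (m y) (e1 y) (e2 y)\<bar> < c * \<delta>"
      unfolding F_def eventually_nhds_metric by blast
    define \<rho> where "\<rho> = min (e/3) e2'"
    show "\<exists>\<delta>>0. \<exists>\<rho>>0. \<forall>D1 D2. 0 < D1 \<longrightarrow> 0 < D2 \<longrightarrow> dist (D1, D2) (D, D) < \<rho> \<longrightarrow>
        (\<forall>mu\<in>{muc2 - \<delta>..muc2 + \<delta>}. muc1 f1 f2 D g1 g2 D1 D2 < mu) \<and>
        (\<exists>a a' :: real \<Rightarrow> real.
           (\<forall>mu\<in>{muc2 - \<delta>..muc2 + \<delta>}.
              (\<exists>r \<omega>. r < 0 \<and> \<omega> \<noteq> 0 \<and>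
                 eigenvalues (jac f1 f2 df1 df2 D g1 g2 D1 D2 (E2 f1 f2 D g1 g2 mu D1 D2))
                   = {complex_of_real r, Complex (a mu) \<omega>, Complex (a mu) (- \<omega>)}) \<and>
              (a has_real_derivative a' mu) (at mu within {muc2 - \<delta>..muc2 + \<delta>}) \<and>
              0 < a' mu) \<and>
           (\<exists>mus\<in>{muc2 - \<delta><..<muc2 + \<delta>}. a mus = 0))"
    proof (rule exI[of _ \<delta>], rule conjI[OF \<delta>], rule exI[of _ \<rho>], intro conjI allI impI)
      show "\<rho> > 0" unfolding \<rho>_def using e e2' by simp
      fix D1 D2 assume h: "0 < D1" "0 < D2" "dist (D1, D2) (D, D) < \<rho>"
      have G: "Good (mu, D1, D2) \<and> aad mu D1 D2 > c" if "mu \<in> {muc2 - \<delta>..muc2 + \<delta>}" for mu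
      proof -
        have a: "\<bar>mu - muc2\<bar> \<le> e/3" by (intro abs_leI) (use that in \<open>auto simp: \<delta>_def\<close>)
        have "dist (D1, D2) (D, D) < e/3" using h(3) unfolding \<rho>_def by simp
        from e(2)[rule_format, OF box[OF e(1) a this]] show ?thesis unfolding m_def e1_def e2_def by simp
      qed
      show "\<forall>mu\<in>{muc2 - \<delta>..muc2 + \<delta>}. muc1 f1 f2 D g1 g2 D1 D2 < mu"
        using G unfolding Gsimp by blast
      have der: "((\<lambda>mu. aa mu D1 D2) has_real_derivative aad mu D1 D2) (at mu)"
        if "mu \<in> {muc2 - \<delta>..muc2 + \<delta>}" for mu
        using G[OF that] unfolding Gsimp by (intro daa) auto
      have small: "\<bar>aa muc2 D1 D2\<bar> < c * \<delta>"
      proof -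
        have "dist (muc2, D1, D2) b0 < e2'"
          unfolding b0_def dist_Pair_Pair[of muc2 "(D1, D2)"] using h \<rho>_def by simp
        thus ?thesis using e2'(2) unfolding m_def e1_def e2_def by auto
      qed
      have inc: "aa y D1 D2 - c * y < aa z D1 D2 - c * z"
        if "muc2 - \<delta> \<le> y" "y < z" "z \<le> muc2 + \<delta>" for y z
      proof (rule DERIV_pos_imp_increasing[OF that(2)])
        fix x assume "y \<le> x" "x \<le> z"
        hence x: "x \<in> {muc2 - \<delta>..muc2 + \<delta>}" using that by auto
        show "\<exists>d. DERIV (\<lambda>mu. aa mu D1 D2 - c * mu) x :> d \<and> d > 0"
          using G[OF x] der[OF x] by (intro exI[of _ "aad x D1 D2 - c"]) (auto intro!: derivative_eq_intros)
      qed
      have lo: "aa (muc2 - \<delta>) D1 D2 < 0"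
        using inc[of "muc2 - \<delta>" muc2] \<delta> small by (simp add: algebra_simps abs_less_iff)
      have hi: "aa (muc2 + \<delta>) D1 D2 > 0"
        using inc[of muc2 "muc2 + \<delta>"] \<delta> small by (simp add: algebra_simps abs_less_iff)
      have cont: "continuous_on {muc2 - \<delta>..muc2 + \<delta>} (\<lambda>mu. aa mu D1 D2)"
        using der by (intro DERIV_atLeastAtMost_imp_continuous_on) auto
      obtain mus where mus: "muc2 - \<delta> \<le> mus" "mus \<le> muc2 + \<delta>" "aa mus D1 D2 = 0"
        using IVT'[of "\<lambda>mu. aa mu D1 D2" "muc2 - \<delta>" 0 "muc2 + \<delta>", OF _ _ _ cont] lo hi \<delta> by auto
      have "mus \<noteq> muc2 - \<delta>" "mus \<noteq> muc2 + \<delta>" using mus lo hi by auto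
      hence mus': "mus \<in> {muc2 - \<delta><..<muc2 + \<delta>}" using mus by auto
      show "\<exists>a a' :: real \<Rightarrow> real.
           (\<forall>mu\<in>{muc2 - \<delta>..muc2 + \<delta>}.
              (\<exists>r \<omega>. r < 0 \<and> \<omega> \<noteq> 0 \<and>
                 eigenvalues (jac f1 f2 df1 df2 D g1 g2 D1 D2 (E2 f1 f2 D g1 g2 mu D1 D2))
                   = {complex_of_real r, Complex (a mu) \<omega>, Complex (a mu) (- \<omega>)}) \<and>
              (a has_real_derivative a' mu) (at mu within {muc2 - \<delta>..muc2 + \<delta>}) \<and>
              0 < a' mu) \<and>
           (\<exists>mus\<in>{muc2 - \<delta><..<muc2 + \<delta>}. a mus = 0)"
      proof (rule exI[of _ "\<lambda>mu. aa mu D1 D2"], rule exI[of _ "\<lambda>mu. aad mu D1 D2"], intro conjI ballI)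
        fix mu assume mu: "mu \<in> {muc2 - \<delta>..muc2 + \<delta>}"
        show "\<exists>r \<omega>. r < 0 \<and> \<omega> \<noteq> 0 \<and>
                 eigenvalues (jac f1 f2 df1 df2 D g1 g2 D1 D2 (E2 f1 f2 D g1 g2 mu D1 D2))
                   = {complex_of_real r, Complex (aa mu D1 D2) \<omega>, Complex (aa mu D1 D2) (- \<omega>)}"
          using eigG[of mu D1 D2] G[OF mu] by blast
        show "((\<lambda>mu. aa mu D1 D2) has_real_derivative aad mu D1 D2) (at mu within {muc2 - \<delta>..muc2 + \<delta>})"
          using der[OF mu] by (rule has_field_derivative_at_within)
        show "0 < aad mu D1 D2" using G[OF mu] c by simp
      next
        show "\<exists>mus\<in>{muc2 - \<delta><..<muc2 + \<delta>}. aa mus D1 D2 = 0" using mus' mus(3) by blast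
      qed
    qed
  qed
qed

end

theorem theorem3p8:
  fixes f1 f2 df1 ddf1 dddf1 df2 ddf2 :: "real \<Rightarrow> real"
    and D g1 g2 muc2 :: real
  assumes D_pos: "0 < D" and g1_pos: "0 < g1" and g2_pos: "0 < g2"
    and f1_nonneg: "\<forall>x\<ge>0. 0 \<le> f1 x" and f2_nonneg: "\<forall>x\<ge>0. 0 \<le> f2 x"
    and f1_bdd: "bounded (f1 ` {0..})" and f2_bdd: "bounded (f2 ` {0..})"
    and f1_0: "f1 0 = 0" and f2_0: "f2 0 = 0"
    and f1_deriv: "\<forall>x\<ge>0. (f1 has_real_derivative df1 x) (at x within {0..})"
    and f2_deriv: "\<forall>x\<ge>0. (f2 has_real_derivative df2 x) (at x within {0..})"
    and df1_cont: "continuous_on {0..} df1" and df2_cont: "continuous_on {0..} df2"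
    and df1_pos: "\<forall>x\<ge>0. 0 < df1 x" and df2_pos: "\<forall>x\<ge>0. 0 < df2 x"
    and lim_cond: "\<exists>e>0. \<forall>d. \<bar>d - D\<bar> < e \<longrightarrow>
                      d / g1 < Lim at_top f1 \<and> d / g2 < Lim at_top f2"
    and f1_C3: "\<forall>x\<ge>0. (df1 has_real_derivative ddf1 x) (at x within {0..})
                 \<and> (ddf1 has_real_derivative dddf1 x) (at x within {0..})"
    and dddf1_cont: "continuous_on {0..} dddf1"
    and f2_C2: "\<forall>x\<ge>0. (df2 has_real_derivative ddf2 x) (at x within {0..})"
    and ddf2_cont: "continuous_on {0..} ddf2"
    and hyp_A: "D / (g2 * lamZ f2 g2 D) > df2 (lamZ f2 g2 D)"
    and muc2_gt: "muc2 > muc1 f1 f2 D g1 g2 D D"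
    and A_zero: "Afun f1 f2 df1 df2 D g1 g2 muc2 = 0"
  shows
    "(\<exists>\<delta>>0. \<exists>\<rho>>0. \<forall>D1 D2. 0 < D1 \<longrightarrow> 0 < D2 \<longrightarrow> dist (D1, D2) (D, D) < \<rho> \<longrightarrow>
        (\<forall>mu\<in>{muc2 - \<delta>..muc2 + \<delta>}.
           muc1 f1 f2 D g1 g2 D1 D2 < mu \<and>
           (\<exists>a r \<omega>. r < 0 \<and> \<omega> \<noteq> 0 \<and>
              eigenvalues (jac f1 f2 df1 df2 D g1 g2 D1 D2 (E2 f1 f2 D g1 g2 mu D1 D2))
                = {complex_of_real r, Complex a \<omega>, Complex a (- \<omega>)})))
   \<and> (ddf1 (Neq f1 f2 D g1 g2 muc2 D D) < 0 \<longrightarrow>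
      (\<exists>\<delta>>0. \<exists>\<rho>>0. \<forall>D1 D2. 0 < D1 \<longrightarrow> 0 < D2 \<longrightarrow> dist (D1, D2) (D, D) < \<rho> \<longrightarrow>
        (\<forall>mu\<in>{muc2 - \<delta>..muc2 + \<delta>}. muc1 f1 f2 D g1 g2 D1 D2 < mu) \<and>
        (\<exists>a a' :: real \<Rightarrow> real.
           (\<forall>mu\<in>{muc2 - \<delta>..muc2 + \<delta>}.
              (\<exists>r \<omega>. r < 0 \<and> \<omega> \<noteq> 0 \<and>
                 eigenvalues (jac f1 f2 df1 df2 D g1 g2 D1 D2 (E2 f1 f2 D g1 g2 mu D1 D2))
                   = {complex_of_real r, Complex (a mu) \<omega>, Complex (a mu) (- \<omega>)}) \<and>
              (a has_real_derivative a' mu) (at mu within {muc2 - \<delta>..muc2 + \<delta>}) \<and>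
              0 < a' mu) \<and>
           (\<exists>mus\<in>{muc2 - \<delta><..<muc2 + \<delta>}. a mus = 0))))"
proof -
  obtain e where e: "e > 0" "\<forall>d. \<bar>d - D\<bar> < e \<longrightarrow> d / g1 < Lim at_top f1 \<and> d / g2 < Lim at_top f2"
    using lim_cond by blast
  have lim: "D / g1 < Lim at_top f1" "D / g2 < Lim at_top f2" using e by auto
  have dd: "\<forall>x\<ge>0. (df1 has_real_derivative ddf1 x) (at x within {0..})" using f1_C3 by blast
  have ddc: "\<forall>x>0. isCont ddf1 x"
  proof (intro allI impI)
    fix x :: real assume x: "x > 0"
    hence "(ddf1 has_real_derivative dddf1 x) (at x)" using deriv_at_pos f1_C3 by auto
    from DERIV_continuous[OF this] show "isCont ddf1 x" by (simp add: continuous_at)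
  qed
  interpret model f1 f2 df1 ddf1 df2 D g1 g2
    using D_pos g1_pos g2_pos f1_bdd f2_bdd f1_0 f2_0 f1_deriv f2_deriv df2_cont df1_pos df2_pos lim dd ddc
    by unfold_locales auto
  show ?thesis using main_model[OF muc2_gt A_zero hyp_A] .
qed

end
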